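(* Consider group testing with $p$ items, $k=\Theta(p^\theta)$ defectives ($\theta\in(0,1)$), i.i.d. Bernoulli testing with parameter $\nu>0$, and reverse $Z$-channel noise with parameter $\rho\in(0,1)$. Call a non-defective item $j$ an intruding possible defective if it appears in no negative test, and for such $j$ let $N_j$ be the number of false positive tests (tests containing no defective item whose outcome is positive) that contain $j$. Fix $\gamma>0$ and $\Phi>\rho$, and let $c=\Phi\nu e^{-\nu}\gamma\log p$ and $n=\gamma k\log p$. If $\gamma\nu e^{-\nu}(D_\rho(\Phi)+1-\rho)<1$, then with probability tending to one as $p\to\infty$ there exists an intruding possible defective (non-defective) item $j$ with $N_j>c$.
   Context: Setup: unknown defective set $S$ uniform among size-$k$ subsets of $\{1,\dots,p\}$, $p\to\infty$. Test matrix $\mathbf X\in\{0,1\}^{n\times p}$ with i.i.d. Bernoulli$(\nu/k)$ entries ($X_{ij}=1$ iff item $j$ is in test $i$). Noiseless outcome $U_i=\bigvee_{j\in S}X_{ij}$; observed $Y_i$ obtained independently via the reverse $Z$-channel: $P(Y=1|U=0)=\rho$, $P(Y=0|U=0)=1-\rho$, $P(Y=1|U=1)=1$. A test is negative if $Y_i=0$, positive if $Y_i=1$. Natural logarithms. $D_\gamma(t)=t\log(t/\gamma)-t+\gamma$ for $\gamma>0$, $t\ge0$. *)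

theory Defs
  imports "HOL-Probability.Probability" "HOL-Library.Landau_Symbols"
begin

definition Dfun :: "real \<Rightarrow> real \<Rightarrow> real" where
  "Dfun g t = t * ln (t / g) - t + g"

text \<open>Items are 1..p, tests are 0..<n.  A sample is (S, X, Y): defective set S,
  test matrix X (X (i,j) iff item j in test i), observed outcomes Y.\<close>

definition noiseless_outcome :: "nat set \<Rightarrow> (nat \<times> nat \<Rightarrow> bool) \<Rightarrow> nat \<Rightarrow> bool" where
  "noiseless_outcome S X i = (\<exists>j\<in>S. X (i, j))"

definition gt_pmf :: "nat \<Rightarrow> nat \<Rightarrow> nat \<Rightarrow> real \<Rightarrow> real \<Rightarrow>
    (nat set \<times> (nat \<times> nat \<Rightarrow> bool) \<times> (nat \<Rightarrow> bool)) pmf" where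
  "gt_pmf p k n \<nu> \<rho> =
     bind_pmf (pmf_of_set {S. S \<subseteq> {1..p} \<and> card S = k}) (\<lambda>S.
     bind_pmf (Pi_pmf ({0..<n} \<times> {1..p}) False (\<lambda>_. bernoulli_pmf (\<nu> / real k))) (\<lambda>X.
     bind_pmf (Pi_pmf {0..<n} False (\<lambda>_. bernoulli_pmf \<rho>)) (\<lambda>Z.
     return_pmf (S, X, (\<lambda>i. noiseless_outcome S X i \<or> Z i)))))"

definition intruding_possible_defective ::
    "nat \<Rightarrow> nat \<Rightarrow> nat set \<Rightarrow> (nat \<times> nat \<Rightarrow> bool) \<Rightarrow> (nat \<Rightarrow> bool) \<Rightarrow> nat \<Rightarrow> bool" where
  "intruding_possible_defective p n S X Y j =
     (j \<in> {1..p} \<and> j \<notin> S \<and> (\<forall>i<n. X (i, j) \<longrightarrow> Y i))"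

definition N_fp :: "nat \<Rightarrow> nat set \<Rightarrow> (nat \<times> nat \<Rightarrow> bool) \<Rightarrow> (nat \<Rightarrow> bool) \<Rightarrow> nat \<Rightarrow> nat" where
  "N_fp n S X Y j = card {i. i < n \<and> X (i, j) \<and> \<not> noiseless_outcome S X i \<and> Y i}"

end

theory Submission
  imports Defs "HOL-Real_Asymp.Real_Asymp"
begin

lemma prob_pair_pmf_times:
  "measure_pmf.prob (pair_pmf M N) (A \<times> B) = measure_pmf.prob M A * measure_pmf.prob N B"
proof -
  have "measure_pmf.prob (pair_pmf M N) (A \<times> B) = measure_pmf.prob (pair_pmf M N) ((A \<inter> set_pmf M) \<times> (B \<inter> set_pmf N))"
    by (intro measure_prob_cong_0) (auto simp: pmf_pair set_pmf_iff)
  also have "\<dots> = measure_pmf.prob M (A \<inter> set_pmf M) * measure_pmf.prob N (B \<inter> set_pmf N)"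
    by (intro measure_pmf_prob_product) auto
  also have "\<dots> = measure_pmf.prob M A * measure_pmf.prob N B"
    by (simp add: measure_Int_set_pmf)
  finally show ?thesis .
qed

lemma Pi_pmf_blocks:
  fixes B :: "'j \<Rightarrow> 'a set" and Q :: "'j \<Rightarrow> ('a \<Rightarrow> 'b) \<Rightarrow> bool"
  assumes finJ: "finite J" and finB: "\<And>j. j \<in> J \<Longrightarrow> finite (B j)"
    and disj: "\<And>i j. i \<in> J \<Longrightarrow> j \<in> J \<Longrightarrow> i \<noteq> j \<Longrightarrow> B i \<inter> B j = {}"
    and loc: "\<And>j f g. j \<in> J \<Longrightarrow> (\<And>x. x \<in> B j \<Longrightarrow> f x = g x) \<Longrightarrow> Q j f = Q j g"
  shows "measure_pmf.prob (Pi_pmf (\<Union>j\<in>J. B j) d p) {f. \<forall>j\<in>J. Q j f}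
         = (\<Prod>j\<in>J. measure_pmf.prob (Pi_pmf (B j) d p) {f. Q j f})"
proof -
  have "J' \<subseteq> J \<Longrightarrow> measure_pmf.prob (Pi_pmf (\<Union>j\<in>J'. B j) d p) {f. \<forall>j\<in>J'. Q j f}
         = (\<Prod>j\<in>J'. measure_pmf.prob (Pi_pmf (B j) d p) {f. Q j f})" if "finite J'" for J'
    using that
  proof (induction J' rule: finite_induct)
    case empty
    show ?case by simp
  next
    case (insert j J')
    define U where "U = (\<Union>j\<in>J'. B j)"
    have jJ: "j \<in> J" using insert.prems by auto
    have finU: "finite U" using insert finB by (auto simp: U_def)
    have finBj: "finite (B j)" using jJ finB by auto
    have disjU: "B j \<inter> U = {}" using disj insert.prems insert.hyps(2) by (fastforce simp: U_def)
    have eqU: "(\<Union>j\<in>insert j J'. B j) = B j \<union> U" by (simp add: U_def)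
    have pre: "(\<lambda>(f,g) x. if x \<in> B j then f x else g x) -` {f. \<forall>j'\<in>insert j J'. Q j' f}
         = {f. Q j f} \<times> {g. \<forall>j'\<in>J'. Q j' g}"
    proof (intro set_eqI iffI)
      fix fg :: "('a \<Rightarrow> 'b) \<times> ('a \<Rightarrow> 'b)"
      obtain f g where fg: "fg = (f, g)" by (cases fg)
      have e1: "Q j (\<lambda>x. if x \<in> B j then f x else g x) = Q j f"
        by (rule loc[OF jJ]) auto
      have e2: "Q j' (\<lambda>x. if x \<in> B j then f x else g x) = Q j' g" if "j' \<in> J'" for j'
      proof (rule loc)
        show "j' \<in> J" using that insert.prems by auto
        fix x assume "x \<in> B j'"
        moreover have "B j \<inter> B j' = {}" using disj[of j j'] that insert.hyps(2) insert.prems by auto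
        ultimately show "(if x \<in> B j then f x else g x) = g x" by auto
      qed
      { assume "fg \<in> (\<lambda>(f,g) x. if x \<in> B j then f x else g x) -` {f. \<forall>j'\<in>insert j J'. Q j' f}"
        then show "fg \<in> {f. Q j f} \<times> {g. \<forall>j'\<in>J'. Q j' g}" using e1 e2 by (auto simp: fg) }
      { assume "fg \<in> {f. Q j f} \<times> {g. \<forall>j'\<in>J'. Q j' g}"
        then show "fg \<in> (\<lambda>(f,g) x. if x \<in> B j then f x else g x) -` {f. \<forall>j'\<in>insert j J'. Q j' f}"
          using e1 e2 by (auto simp: fg) }
    qed
    have IH: "measure_pmf.prob (Pi_pmf U d p) {f. \<forall>j\<in>J'. Q j f}
           = (\<Prod>j\<in>J'. measure_pmf.prob (Pi_pmf (B j) d p) {f. Q j f})"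
      unfolding U_def using insert.prems by (intro insert.IH) auto
    have "measure_pmf.prob (Pi_pmf (\<Union>j\<in>insert j J'. B j) d p) {f. \<forall>j'\<in>insert j J'. Q j' f}
        = measure_pmf.prob (pair_pmf (Pi_pmf (B j) d p) (Pi_pmf U d p)) ({f. Q j f} \<times> {g. \<forall>j'\<in>J'. Q j' g})"
      unfolding eqU by (subst Pi_pmf_union[OF finBj finU disjU]) (simp only: measure_map_pmf pre)
    also have "\<dots> = measure_pmf.prob (Pi_pmf (B j) d p) {f. Q j f} * (\<Prod>j\<in>J'. measure_pmf.prob (Pi_pmf (B j) d p) {f. Q j f})"
      by (simp only: prob_pair_pmf_times IH)
    also have "\<dots> = (\<Prod>j\<in>insert j J'. measure_pmf.prob (Pi_pmf (B j) d p) {f. Q j f})"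
      using insert.hyps by simp
    finally show ?case .
  qed
  then show ?thesis using finJ by blast
qed


lemma prob_bern_sets:
  assumes "0 \<le> q" "q \<le> 1"
  shows "measure_pmf.prob (bernoulli_pmf q) {True} = q"
    and "measure_pmf.prob (bernoulli_pmf q) {False} = 1 - q"
    and "measure_pmf.prob (bernoulli_pmf q) UNIV = 1"
  using assms by (simp_all add: measure_pmf_single)

lemma prob_col_event:
  fixes D D0 D1 :: "'a set"
  assumes D: "finite D" "D0 \<subseteq> D" "D1 \<subseteq> D" "D0 \<inter> D1 = {}" and q: "0 \<le> q" "q \<le> 1"
  shows "measure_pmf.prob (Pi_pmf D False (\<lambda>_. bernoulli_pmf q))
           {f. (\<forall>x\<in>D0. \<not> f x) \<and> r \<le> card {x\<in>D1. f x}}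
        \<ge> real (card D1 choose r) * q ^ r * (1 - q) ^ (card D0 + card D1)"
proof -
  let ?P = "Pi_pmf D False (\<lambda>_. bernoulli_pmf q)"
  define \<A> where "\<A> = {A. A \<subseteq> D1 \<and> card A = r}"
  define ev where "ev A = {f. \<forall>x\<in>D0 \<union> D1. f x = (x \<in> A)}" for A
  have finD1: "finite D1" "finite D0" using D finite_subset by blast+
  have fin\<A>: "finite \<A>" unfolding \<A>_def using finD1 by auto
  have card\<A>: "card \<A> = card D1 choose r" unfolding \<A>_def using n_subsets[OF finD1(1)] by simp
  have sub: "(\<Union>A\<in>\<A>. ev A) \<subseteq> {f. (\<forall>x\<in>D0. \<not> f x) \<and> r \<le> card {x\<in>D1. f x}}"
  proof
    fix f assume "f \<in> (\<Union>A\<in>\<A>. ev A)"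
    then obtain A where A: "A \<subseteq> D1" "card A = r" "\<forall>x\<in>D0 \<union> D1. f x = (x \<in> A)"
      by (auto simp: \<A>_def ev_def)
    have "{x\<in>D1. f x} = A" using A by auto
    moreover have "\<forall>x\<in>D0. \<not> f x" using A D(4) by auto
    ultimately show "f \<in> {f. (\<forall>x\<in>D0. \<not> f x) \<and> r \<le> card {x\<in>D1. f x}}" using A by auto
  qed
  have disjf: "disjoint_family_on ev \<A>"
    unfolding disjoint_family_on_def \<A>_def ev_def by auto
  define g where "g A x = (if x \<in> A then q else if x \<in> D0 \<union> D1 then 1 - q else 1)" for A x
  have evA: "measure_pmf.prob ?P (ev A) \<ge> q ^ r * (1 - q) ^ (card D0 + card D1)" if "A \<in> \<A>" for A
  proof -
    have A: "A \<subseteq> D1" "card A = r" using that by (auto simp: \<A>_def)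
    have finA: "finite A" using A finD1 finite_subset by blast
    define Bs where "Bs x = (if x \<in> A then {True} else if x \<in> D0 \<union> D1 then {False} else UNIV)" for x
    have "ev A = Pi D Bs" using D A unfolding ev_def Bs_def Pi_def by auto
    then have "measure_pmf.prob ?P (ev A) = (\<Prod>x\<in>D. measure_pmf.prob (bernoulli_pmf q) (Bs x))"
      using measure_Pi_pmf_Pi[OF D(1)] by simp
    also have "\<dots> = (\<Prod>x\<in>D. g A x)"
      by (intro prod.cong refl) (simp add: Bs_def g_def prob_bern_sets[OF q])
    also have "\<dots> = (\<Prod>x\<in>D0 \<union> D1. g A x)"
      using D A by (intro prod.mono_neutral_right) (auto simp: g_def)
    also have "\<dots> = (\<Prod>x\<in>A. g A x) * (\<Prod>x\<in>(D0 \<union> D1) - A. g A x)"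
      using A finD1 by (subst prod.subset_diff[of A]) auto
    also have "\<dots> = q ^ card A * (1 - q) ^ card ((D0 \<union> D1) - A)"
      by (simp add: g_def)
    also have "\<dots> \<ge> q ^ r * (1 - q) ^ (card D0 + card D1)"
    proof -
      have "card ((D0 \<union> D1) - A) \<le> card D0 + card D1"
        using card_mono[of "D0 \<union> D1" "(D0 \<union> D1) - A"] card_Un_le[of D0 D1] finD1 by auto
      then have "(1 - q) ^ (card D0 + card D1) \<le> (1 - q) ^ card ((D0 \<union> D1) - A)"
        using q by (intro power_decreasing) auto
      then show ?thesis using A q by (simp add: mult_left_mono)
    qed
    finally show ?thesis .
  qed
  have "measure_pmf.prob ?P (\<Union>A\<in>\<A>. ev A) = (\<Sum>A\<in>\<A>. measure_pmf.prob ?P (ev A))"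
    by (intro measure_pmf.finite_measure_finite_Union fin\<A> disjf) auto
  also have "\<dots> \<ge> (\<Sum>A\<in>\<A>. q ^ r * (1 - q) ^ (card D0 + card D1))"
    by (intro sum_mono evA)
  finally have "measure_pmf.prob ?P (\<Union>A\<in>\<A>. ev A) \<ge> real (card D1 choose r) * q ^ r * (1 - q) ^ (card D0 + card D1)"
    by (simp add: card\<A>)
  moreover have "measure_pmf.prob ?P (\<Union>A\<in>\<A>. ev A) \<le> measure_pmf.prob ?P {f. (\<forall>x\<in>D0. \<not> f x) \<and> r \<le> card {x\<in>D1. f x}}"
    by (intro measure_pmf.finite_measure_mono sub) auto
  ultimately show ?thesis by linarith
qed


lemma rows_dist:
  fixes T S :: "nat set"
  assumes T: "finite T" and S: "finite S" and q: "0 \<le> q" "q \<le> 1"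
  shows "map_pmf (\<lambda>X i. i \<in> T \<and> (\<forall>j\<in>S. \<not> X (i,j))) (Pi_pmf (T \<times> S) False (\<lambda>_. bernoulli_pmf q))
       = Pi_pmf T False (\<lambda>_. bernoulli_pmf ((1 - q) ^ card S))"
proof (rule pmf_eqI)
  fix w :: "nat \<Rightarrow> bool"
  let ?P = "Pi_pmf (T \<times> S) False (\<lambda>_. bernoulli_pmf q)"
  let ?W = "\<lambda>X i. i \<in> T \<and> (\<forall>j\<in>S. \<not> X (i,j))"
  have pi: "0 \<le> (1 - q) ^ card S" "(1 - q) ^ card S \<le> 1" using q by (auto intro: power_le_one)
  show "pmf (map_pmf ?W ?P) w = pmf (Pi_pmf T False (\<lambda>_. bernoulli_pmf ((1 - q) ^ card S))) w"
  proof (cases "\<exists>x. x \<notin> T \<and> w x \<noteq> False")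
    case True
    then have "?W -` {w} = {}" by auto
    then show ?thesis using True by (simp add: pmf_map pmf_Pi_outside[OF T])
  next
    case False
    have pre: "?W -` {w} = {X. \<forall>i\<in>T. (\<forall>j\<in>S. \<not> X (i,j)) = w i}"
      using False by (auto simp: fun_eq_iff) metis+
    have un: "(\<Union>i\<in>T. {i} \<times> S) = T \<times> S" by auto
    have "pmf (map_pmf ?W ?P) w = measure_pmf.prob ?P {X. \<forall>i\<in>T. (\<forall>j\<in>S. \<not> X (i,j)) = w i}"
      by (simp add: pmf_map pre)
    also have "\<dots> = (\<Prod>i\<in>T. measure_pmf.prob (Pi_pmf ({i} \<times> S) False (\<lambda>_. bernoulli_pmf q)) {X. (\<forall>j\<in>S. \<not> X (i,j)) = w i})"
      using Pi_pmf_blocks[of T "\<lambda>i. {i} \<times> S" "\<lambda>i X. (\<forall>j\<in>S. \<not> X (i,j)) = w i" False "\<lambda>_. bernoulli_pmf q"] T S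
      unfolding un by auto
    also have "\<dots> = (\<Prod>i\<in>T. pmf (bernoulli_pmf ((1 - q) ^ card S)) (w i))"
    proof (intro prod.cong refl)
      fix i assume i: "i \<in> T"
      let ?Q = "Pi_pmf ({i} \<times> S) False (\<lambda>_. bernoulli_pmf q)"
      have e: "{X. \<forall>j\<in>S. \<not> X (i,j)} = Pi ({i} \<times> S) (\<lambda>_. {False})" by (auto simp: Pi_def)
      have c: "card ({i} \<times> S) = card S" by (simp add: card_cartesian_product)
      have m: "measure_pmf.prob ?Q {X. \<forall>j\<in>S. \<not> X (i,j)} = (1 - q) ^ card S"
        unfolding e using S q by (subst measure_Pi_pmf_Pi) (auto simp: measure_pmf_single c)
      show "measure_pmf.prob ?Q {X. (\<forall>j\<in>S. \<not> X (i,j)) = w i} = pmf (bernoulli_pmf ((1 - q) ^ card S)) (w i)"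
      proof (cases "w i")
        case True
        then show ?thesis using m pi by simp
      next
        case False
        have "{X. (\<forall>j\<in>S. \<not> X (i,j)) = w i} = UNIV - {X. \<forall>j\<in>S. \<not> X (i,j)}" using False by auto
        then show ?thesis using m pi False measure_pmf.prob_compl[of "{X. \<forall>j\<in>S. \<not> X (i,j)}" ?Q] by simp
      qed
    qed
    also have "\<dots> = pmf (Pi_pmf T False (\<lambda>_. bernoulli_pmf ((1 - q) ^ card S))) w"
      using False T by (subst pmf_Pi') auto
    finally show ?thesis .
  qed
qed


lemma pmf_integrable_bounded:
  fixes g :: "'a \<Rightarrow> real"
  assumes "\<And>x. \<bar>g x\<bar> \<le> B"
  shows "integrable (measure_pmf M) g"
  by (rule measure_pmf.integrable_const_bound[where B=B]) (use assms in auto)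

lemma prob_bind_pmf:
  "measure_pmf.prob (bind_pmf M f) A = measure_pmf.expectation M (\<lambda>x. measure_pmf.prob (f x) A)"
proof -
  have "ennreal (measure_pmf.prob (bind_pmf M f) A) = emeasure (bind_pmf M f) A"
    by (simp add: measure_pmf.emeasure_eq_measure)
  also have "\<dots> = (\<integral>\<^sup>+x. emeasure (f x) A \<partial>M)" by simp
  also have "\<dots> = (\<integral>\<^sup>+x. ennreal (measure_pmf.prob (f x) A) \<partial>M)"
    by (simp add: measure_pmf.emeasure_eq_measure)
  also have "\<dots> = ennreal (measure_pmf.expectation M (\<lambda>x. measure_pmf.prob (f x) A))"
    by (intro nn_integral_eq_integral pmf_integrable_bounded[where B=1]) auto
  finally show ?thesis by (simp add: ennreal_inj integral_nonneg_AE)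
qed


lemma exp_of_bool:
  "measure_pmf.expectation M (\<lambda>x. of_bool (P x) :: real) = measure_pmf.prob M {x. P x}"
proof -
  have "(\<lambda>x. of_bool (P x) :: real) = indicator {x. P x}" by (auto simp: indicator_def)
  then show ?thesis by simp
qed

lemma expectation_ge:
  fixes f g :: "'a \<Rightarrow> real"
  assumes "\<And>x. f x \<ge> a - g x" "\<And>x. \<bar>f x\<bar> \<le> B" "\<And>x. \<bar>g x\<bar> \<le> B"
  shows "measure_pmf.expectation M f \<ge> a - measure_pmf.expectation M g"
proof -
  have ig: "integrable (measure_pmf M) g" by (rule pmf_integrable_bounded[where B=B]) (rule assms)
  have if': "integrable (measure_pmf M) f" by (rule pmf_integrable_bounded[where B=B]) (rule assms)
  have "measure_pmf.expectation M (\<lambda>x. a - g x) = a - measure_pmf.expectation M g"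
    using ig by (simp add: Bochner_Integration.integral_diff measure_pmf.prob_space)
  moreover have "measure_pmf.expectation M (\<lambda>x. a - g x) \<le> measure_pmf.expectation M f"
    using ig if' assms(1) by (intro integral_mono) auto
  ultimately show ?thesis by simp
qed

lemma choose_mono_left: "m \<le> m' \<Longrightarrow> m choose r \<le> m' choose r"
proof -
  assume "m \<le> m'"
  then have "{B. B \<subseteq> {..<m} \<and> card B = r} \<subseteq> {B. B \<subseteq> {..<m'} \<and> card B = r}" by auto
  then have "card {B. B \<subseteq> {..<m} \<and> card B = r} \<le> card {B. B \<subseteq> {..<m'} \<and> card B = r}"
    by (intro card_mono) auto
  then show ?thesis by (simp add: n_subsets)
qed

lemma prob_card_subset_binomial:
  fixes T A :: "nat set"
  assumes "finite T" "A \<subseteq> T" "0 \<le> \<rho>" "\<rho> \<le> 1"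
  shows "measure_pmf.prob (Pi_pmf T False (\<lambda>_. bernoulli_pmf \<rho>)) {Z. P (card {i\<in>A. Z i})}
       = measure_pmf.prob (binomial_pmf (card A) \<rho>) {x. P x}"
proof -
  have finA: "finite A" using assms finite_subset by blast
  have "binomial_pmf (card A) \<rho> = map_pmf (\<lambda>f. card {x\<in>A. f x}) (Pi_pmf A False (\<lambda>_. bernoulli_pmf \<rho>))"
    using assms finA by (intro binomial_pmf_altdef') auto
  also have "Pi_pmf A False (\<lambda>_. bernoulli_pmf \<rho>) = map_pmf (\<lambda>f x. if x \<in> A then f x else False) (Pi_pmf T False (\<lambda>_. bernoulli_pmf \<rho>))"
    using assms by (intro Pi_pmf_subset) auto
  also have "map_pmf (\<lambda>f. card {x\<in>A. f x}) (map_pmf (\<lambda>f x. if x \<in> A then f x else False) (Pi_pmf T False (\<lambda>_. bernoulli_pmf \<rho>)))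
     = map_pmf (\<lambda>f. card {x\<in>A. f x}) (Pi_pmf T False (\<lambda>_. bernoulli_pmf \<rho>))"
    unfolding pmf.map_comp o_def
    by (intro map_pmf_cong refl arg_cong[where f=card]) auto
  finally have "binomial_pmf (card A) \<rho> = map_pmf (\<lambda>f. card {x\<in>A. f x}) (Pi_pmf T False (\<lambda>_. bernoulli_pmf \<rho>))" .
  then show ?thesis by simp
qed


lemma inner_bound:
  fixes S :: "nat set" and XS :: "nat \<times> nat \<Rightarrow> bool" and Z :: "nat \<Rightarrow> bool"
  assumes S: "S \<subseteq> {1..p}" and q: "0 \<le> q" "q \<le> 1" and r: "c < real r"
  shows "measure_pmf.prob (Pi_pmf ({0..<n} \<times> ({1..p} - S)) False (\<lambda>_. bernoulli_pmf q))
          {X2. (S, (\<lambda>x. if x \<in> {0..<n} \<times> S then XS x else X2 x),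
                (\<lambda>i. noiseless_outcome S (\<lambda>x. if x \<in> {0..<n} \<times> S then XS x else X2 x) i \<or> Z i))
               \<in> {(S, X, Y). \<exists>j. intruding_possible_defective p n S X Y j \<and> real (N_fp n S X Y j) > c}}
       \<ge> 1 - exp (- real (card ({1..p} - S)) * (real (lo choose r) * q ^ r * (1 - q) ^ hi))
           - of_bool (hi < card {i\<in>{0..<n}. \<forall>j\<in>S. \<not> XS (i,j)})
           - of_bool (card {i\<in>{0..<n}. (\<forall>j\<in>S. \<not> XS (i,j)) \<and> Z i} < lo)"
proof -
  define T where "T = {0..<n::nat}"
  define J where "J = {1..p} - S"
  define W where "W i = (\<forall>j\<in>S. \<not> XS (i,j))" for i
  define N0 where "N0 = {i\<in>T. W i \<and> \<not> Z i}"
  define N1 where "N1 = {i\<in>T. W i \<and> Z i}"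
  define F where "F j X2 = ((\<forall>x\<in>N0 \<times> {j}. \<not> X2 x) \<and> r \<le> card {x\<in>N1 \<times> {j}. X2 x})" for j and X2 :: "nat \<times> nat \<Rightarrow> bool"
  define mg where "mg X2 = (\<lambda>x. if x \<in> T \<times> S then XS x else X2 x)" for X2 :: "nat \<times> nat \<Rightarrow> bool"
  define E where "E = {(S, X, Y). \<exists>j. intruding_possible_defective p n S X Y j \<and> real (N_fp n S X Y j) > c}"
  define P2 where "P2 = Pi_pmf (T \<times> J) False (\<lambda>_. bernoulli_pmf q)"
  define h where "h = real (card N1 choose r) * q ^ r * (1 - q) ^ (card N0 + card N1)"
  define H where "H = real (lo choose r) * q ^ r * (1 - q) ^ hi"
  have finT: "finite T" and finJ: "finite J" by (auto simp: T_def J_def)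
  have finN: "finite N0" "finite N1" by (auto simp: N0_def N1_def T_def)
  have sub: "{X2. \<exists>j\<in>J. F j X2} \<subseteq> {X2. (S, mg X2, (\<lambda>i. noiseless_outcome S (mg X2) i \<or> Z i)) \<in> E}"
  proof
    fix X2 assume "X2 \<in> {X2. \<exists>j\<in>J. F j X2}"
    then obtain j where j: "j \<in> J" and Fj: "F j X2" by auto
    have jS: "j \<notin> S" and jp: "j \<in> {1..p}" using j by (auto simp: J_def)
    let ?X = "mg X2"
    let ?Y = "\<lambda>i. noiseless_outcome S ?X i \<or> Z i"
    have Xj: "?X (i,j) = X2 (i,j)" for i using jS by (auto simp: mg_def)
    have nl: "noiseless_outcome S ?X i = (\<not> W i)" if "i < n" for i
      using that by (auto simp: noiseless_outcome_def mg_def W_def T_def)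
    have ipd: "intruding_possible_defective p n S ?X ?Y j"
      unfolding intruding_possible_defective_def
    proof (intro conjI jp jS allI impI)
      fix i assume i: "i < n" and Xij: "?X (i,j)"
      show "?Y i"
      proof (rule ccontr)
        assume "\<not> ?Y i"
        then have "i \<in> N0" using i nl[OF i] by (auto simp: N0_def T_def)
        then have "\<not> X2 (i,j)" using Fj by (auto simp: F_def)
        then show False using Xij Xj by simp
      qed
    qed
    have "{i. i < n \<and> ?X (i,j) \<and> \<not> noiseless_outcome S ?X i \<and> ?Y i} = {i\<in>N1. X2 (i,j)}"
      using nl Xj by (auto simp: N1_def T_def)
    then have "N_fp n S ?X ?Y j = card {i\<in>N1. X2 (i,j)}" by (simp add: N_fp_def)
    also have "{i\<in>N1. X2 (i,j)} = fst ` {x\<in>N1 \<times> {j}. X2 x}" by force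
    also have "card \<dots> = card {x\<in>N1 \<times> {j}. X2 x}"
      by (intro card_image inj_onI) auto
    finally have "r \<le> N_fp n S ?X ?Y j" using Fj by (simp add: F_def)
    then have "c < real (N_fp n S ?X ?Y j)" using r by linarith
    then show "X2 \<in> {X2. (S, mg X2, (\<lambda>i. noiseless_outcome S (mg X2) i \<or> Z i)) \<in> E}"
      using ipd by (auto simp: E_def)
  qed
  have un: "(\<Union>j\<in>J. T \<times> {j}) = T \<times> J" by auto
  have indep: "measure_pmf.prob P2 {X2. \<forall>j\<in>J. \<not> F j X2}
       = (\<Prod>j\<in>J. measure_pmf.prob (Pi_pmf (T \<times> {j}) False (\<lambda>_. bernoulli_pmf q)) {X2. \<not> F j X2})"
    unfolding P2_def un[symmetric]
  proof (rule Pi_pmf_blocks)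
    fix j and f g :: "nat \<times> nat \<Rightarrow> bool" assume "j \<in> J" and fg: "\<And>x. x \<in> T \<times> {j} \<Longrightarrow> f x = g x"
    have "N0 \<times> {j} \<subseteq> T \<times> {j}" "N1 \<times> {j} \<subseteq> T \<times> {j}" by (auto simp: N0_def N1_def)
    then have "{x\<in>N1 \<times> {j}. f x} = {x\<in>N1 \<times> {j}. g x}" "(\<forall>x\<in>N0 \<times> {j}. \<not> f x) = (\<forall>x\<in>N0 \<times> {j}. \<not> g x)"
      using fg by blast+
    then show "(\<not> F j f) = (\<not> F j g)" by (simp add: F_def)
  qed (use finJ finT in auto)
  have colF: "measure_pmf.prob (Pi_pmf (T \<times> {j}) False (\<lambda>_. bernoulli_pmf q)) {X2. F j X2} \<ge> h" for j
  proof -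
    have c0: "card (N0 \<times> {j}) = card N0" and c1: "card (N1 \<times> {j}) = card N1"
      by (simp_all add: card_cartesian_product)
    have "real (card (N1 \<times> {j}) choose r) * q ^ r * (1 - q) ^ (card (N0 \<times> {j}) + card (N1 \<times> {j}))
          \<le> measure_pmf.prob (Pi_pmf (T \<times> {j}) False (\<lambda>_. bernoulli_pmf q))
              {f. (\<forall>x\<in>N0 \<times> {j}. \<not> f x) \<and> r \<le> card {x\<in>N1 \<times> {j}. f x}}"
      using finT q by (intro prob_col_event) (auto simp: N0_def N1_def)
    then show ?thesis by (simp add: c0 c1 h_def F_def)
  qed
  have h0: "0 \<le> h" using q by (simp add: h_def)
  have "measure_pmf.prob P2 {X2. \<forall>j\<in>J. \<not> F j X2} \<le> (\<Prod>j\<in>J. (1 - h))"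
    unfolding indep
  proof (intro prod_mono conjI)
    fix j assume "j \<in> J"
    let ?Q = "Pi_pmf (T \<times> {j}) False (\<lambda>_. bernoulli_pmf q)"
    have "{X2. \<not> F j X2} = UNIV - {X2. F j X2}" by auto
    then have e: "measure_pmf.prob ?Q {X2. \<not> F j X2} = 1 - measure_pmf.prob ?Q {X2. F j X2}"
      using measure_pmf.prob_compl[of "{X2. F j X2}" ?Q] by simp
    show "0 \<le> measure_pmf.prob ?Q {X2. \<not> F j X2}" by simp
    show "measure_pmf.prob ?Q {X2. \<not> F j X2} \<le> 1 - h" using e colF[of j] by simp
  qed
  also have "\<dots> = (1 - h) ^ card J" by simp
  also have "\<dots> \<le> exp (- h) ^ card J"
  proof (cases "h \<le> 1")
    case True
    then show ?thesis using exp_ge_add_one_self[of "-h"] by (intro power_mono) auto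
  next
    case False
    have "h \<le> 1"
      using colF[of 0] measure_pmf.prob_le_1[of "Pi_pmf (T \<times> {0}) False (\<lambda>_. bernoulli_pmf q)" "{X2. F 0 X2}"] by linarith
    then show ?thesis using False by simp
  qed
  also have "\<dots> = exp (- real (card J) * h)" by (simp add: exp_of_nat_mult[symmetric] mult.commute)
  finally have bad: "measure_pmf.prob P2 {X2. \<forall>j\<in>J. \<not> F j X2} \<le> exp (- real (card J) * h)" .
  have "measure_pmf.prob P2 {X2. \<exists>j\<in>J. F j X2} = 1 - measure_pmf.prob P2 {X2. \<forall>j\<in>J. \<not> F j X2}"
  proof -
    have "{X2. \<exists>j\<in>J. F j X2} = UNIV - {X2. \<forall>j\<in>J. \<not> F j X2}" by auto
    then show ?thesis using measure_pmf.prob_compl[of "{X2. \<forall>j\<in>J. \<not> F j X2}" P2] by simp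
  qed
  then have good: "measure_pmf.prob P2 {X2. (S, mg X2, (\<lambda>i. noiseless_outcome S (mg X2) i \<or> Z i)) \<in> E}
      \<ge> 1 - exp (- real (card J) * h)"
    using bad measure_pmf.finite_measure_mono[OF sub, of P2] by simp
  have cardW: "card {i\<in>T. W i} = card N0 + card N1"
  proof -
    have "{i\<in>T. W i} = N0 \<union> N1" by (auto simp: N0_def N1_def)
    moreover have "N0 \<inter> N1 = {}" by (auto simp: N0_def N1_def)
    ultimately show ?thesis using finN by (simp add: card_Un_disjoint)
  qed
  have final: "measure_pmf.prob P2 {X2. (S, mg X2, (\<lambda>i. noiseless_outcome S (mg X2) i \<or> Z i)) \<in> E}
      \<ge> 1 - exp (- real (card J) * H) - of_bool (hi < card {i\<in>T. W i}) - of_bool (card N1 < lo)"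
  proof (cases "hi < card {i\<in>T. W i} \<or> card N1 < lo")
    case True
    have pnn: "0 \<le> measure_pmf.prob P2 {X2. (S, mg X2, (\<lambda>i. noiseless_outcome S (mg X2) i \<or> Z i)) \<in> E}" by simp
    have ep: "0 < exp (- real (card J) * H)" by simp
    have "(1::real) \<le> of_bool (hi < card {i\<in>T. W i}) + of_bool (card N1 < lo)" using True by auto
    then show ?thesis using pnn ep by linarith
  next
    case False
    then have hiW: "card N0 + card N1 \<le> hi" and loN: "lo \<le> card N1" using cardW by auto
    have "H \<le> h"
    proof -
      have "real (lo choose r) \<le> real (card N1 choose r)" using choose_mono_left[OF loN] by simp
      moreover have "(1 - q) ^ hi \<le> (1 - q) ^ (card N0 + card N1)"
        using q hiW by (intro power_decreasing) auto
      ultimately show ?thesis unfolding H_def h_def using q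
        by (intro mult_mono) auto
    qed
    then have "exp (- real (card J) * h) \<le> exp (- real (card J) * H)" by (simp add: mult_left_mono)
    moreover have "of_bool (hi < card {i\<in>T. W i}) + of_bool (card N1 < lo) = (0::real)" using False by auto
    ultimately show ?thesis using good by linarith
  qed
  have N1eq: "N1 = {i\<in>{0..<n}. (\<forall>j\<in>S. \<not> XS (i,j)) \<and> Z i}" by (simp add: N1_def T_def W_def)
  show ?thesis using final unfolding N1eq H_def P2_def mg_def E_def T_def J_def W_def .
qed


lemma per_S:
  fixes S :: "nat set" and p k n :: nat
  assumes S: "S \<subseteq> {1..p}" "card S = k" and q: "0 \<le> q" "q \<le> 1" and \<rho>: "0 \<le> \<rho>" "\<rho> \<le> 1"
    and r: "c < real r"
    and \<beta>: "\<And>m. mid \<le> real m \<Longrightarrow> measure_pmf.prob (binomial_pmf m \<rho>) {x. x < lo} \<le> \<beta>" and \<beta>0: "0 \<le> \<beta>"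
  shows "measure_pmf.prob (bind_pmf (Pi_pmf ({0..<n} \<times> {1..p}) False (\<lambda>_. bernoulli_pmf q)) (\<lambda>X.
           bind_pmf (Pi_pmf {0..<n} False (\<lambda>_. bernoulli_pmf \<rho>)) (\<lambda>Z.
           return_pmf (S, X, (\<lambda>i. noiseless_outcome S X i \<or> Z i)))))
           {(S, X, Y). \<exists>j. intruding_possible_defective p n S X Y j \<and> real (N_fp n S X Y j) > c}
    \<ge> 1 - exp (- real (p - k) * (real (lo choose r) * q ^ r * (1 - q) ^ hi))
        - measure_pmf.prob (binomial_pmf n ((1 - q) ^ k)) {x. hi < x}
        - measure_pmf.prob (binomial_pmf n ((1 - q) ^ k)) {x. real x < mid} - \<beta>"
proof -
  define T where "T = {0..<n}"
  define J where "J = {1..p} - S"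
  define E where "E = {(S, X, Y). \<exists>j. intruding_possible_defective p n S X Y j \<and> real (N_fp n S X Y j) > c}"
  define P1 where "P1 = Pi_pmf (T \<times> S) False (\<lambda>_. bernoulli_pmf q)"
  define P2 where "P2 = Pi_pmf (T \<times> J) False (\<lambda>_. bernoulli_pmf q)"
  define PZ where "PZ = Pi_pmf T False (\<lambda>_. bernoulli_pmf \<rho>)"
  define mg where "mg X1 X2 = (\<lambda>x. if x \<in> T \<times> S then X1 x else X2 x)" for X1 X2 :: "nat \<times> nat \<Rightarrow> bool"
  define g where "g X1 Z X2 = (S, mg X1 X2, (\<lambda>i. noiseless_outcome S (mg X1 X2) i \<or> Z i))" for X1 Z X2
  define e where "e = exp (- real (p - k) * (real (lo choose r) * q ^ r * (1 - q) ^ hi))"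
  define M where "M X1 = card {i\<in>T. \<forall>j\<in>S. \<not> X1 (i,j)}" for X1 :: "nat \<times> nat \<Rightarrow> bool"
  define \<pi> where "\<pi> = (1 - q) ^ k"
  have finT: "finite T" and finS: "finite S" and finJ: "finite J"
    using S by (auto simp: T_def J_def intro: finite_subset)
  have cardJ: "card J = p - k" using S finite_subset[OF S(1)] by (simp add: J_def card_Diff_subset)
  have cardT: "card T = n" by (simp add: T_def)
  have \<pi>: "0 \<le> \<pi>" "\<pi> \<le> 1" using q by (auto simp: \<pi>_def intro: power_le_one)
  have TI: "{0..<n} \<times> {1..p} = T \<times> S \<union> T \<times> J" using S by (auto simp: T_def J_def)
  have split: "Pi_pmf ({0..<n} \<times> {1..p}) False (\<lambda>_. bernoulli_pmf q)
      = map_pmf (\<lambda>(f,g) x. if x \<in> T \<times> S then f x else g x) (pair_pmf P1 P2)"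
    unfolding TI P1_def P2_def using finT finS finJ by (intro Pi_pmf_union) (auto simp: J_def)
  have restruct: "bind_pmf (Pi_pmf ({0..<n} \<times> {1..p}) False (\<lambda>_. bernoulli_pmf q)) (\<lambda>X.
           bind_pmf (Pi_pmf {0..<n} False (\<lambda>_. bernoulli_pmf \<rho>)) (\<lambda>Z.
           return_pmf (S, X, (\<lambda>i. noiseless_outcome S X i \<or> Z i))))
      = bind_pmf P1 (\<lambda>X1. bind_pmf PZ (\<lambda>Z. map_pmf (g X1 Z) P2))"
  proof -
    have "bind_pmf (Pi_pmf ({0..<n} \<times> {1..p}) False (\<lambda>_. bernoulli_pmf q)) (\<lambda>X.
           bind_pmf PZ (\<lambda>Z. return_pmf (S, X, (\<lambda>i. noiseless_outcome S X i \<or> Z i))))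
        = bind_pmf P1 (\<lambda>X1. bind_pmf P2 (\<lambda>X2. bind_pmf PZ (\<lambda>Z. return_pmf (g X1 Z X2))))"
      unfolding split by (simp add: bind_map_pmf pair_pmf_def bind_assoc_pmf bind_return_pmf g_def mg_def)
    also have "\<dots> = bind_pmf P1 (\<lambda>X1. bind_pmf PZ (\<lambda>Z. bind_pmf P2 (\<lambda>X2. return_pmf (g X1 Z X2))))"
      by (subst bind_commute_pmf) (rule refl)
    also have "\<dots> = bind_pmf P1 (\<lambda>X1. bind_pmf PZ (\<lambda>Z. map_pmf (g X1 Z) P2))"
      by (simp add: map_pmf_def)
    finally show ?thesis by (simp add: PZ_def T_def)
  qed
  have inner: "measure_pmf.prob (bind_pmf PZ (\<lambda>Z. map_pmf (g X1 Z) P2)) E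
      \<ge> (1 - e - \<beta>) - (of_bool (hi < M X1) + of_bool (real (M X1) < mid))" for X1
  proof -
    define A where "A = {i\<in>T. \<forall>j\<in>S. \<not> X1 (i,j)}"
    have AT: "A \<subseteq> T" by (auto simp: A_def)
    have ib: "measure_pmf.prob P2 {X2. g X1 Z X2 \<in> E}
       \<ge> (1 - e - of_bool (hi < M X1)) - of_bool (card {i\<in>A. Z i} < lo)" for Z
    proof -
      have sA: "{i\<in>{0..<n}. (\<forall>j\<in>S. \<not> X1 (i,j)) \<and> Z i} = {i\<in>A. Z i}" by (auto simp: A_def T_def)
      have cJ: "card ({1..p} - S) = p - k" using cardJ by (simp only: J_def)
      note ib0 = inner_bound[OF S(1) q r, where n=n and XS=X1 and Z=Z and lo=lo and hi=hi]
      have eq: "measure_pmf.prob P2 {X2. g X1 Z X2 \<in> E} = measure_pmf.prob (Pi_pmf ({0..<n} \<times> ({1..p} - S)) False (\<lambda>_. bernoulli_pmf q))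
          {X2. (S, (\<lambda>x. if x \<in> {0..<n} \<times> S then X1 x else X2 x),
                (\<lambda>i. noiseless_outcome S (\<lambda>x. if x \<in> {0..<n} \<times> S then X1 x else X2 x) i \<or> Z i))
               \<in> {(S, X, Y). \<exists>j. intruding_possible_defective p n S X Y j \<and> real (N_fp n S X Y j) > c}}"
        unfolding P2_def g_def mg_def E_def T_def J_def ..
      show ?thesis unfolding eq using ib0 unfolding sA cJ e_def M_def T_def .
    qed
    have "measure_pmf.prob (bind_pmf PZ (\<lambda>Z. map_pmf (g X1 Z) P2)) E
        = measure_pmf.expectation PZ (\<lambda>Z. measure_pmf.prob P2 {X2. g X1 Z X2 \<in> E})"
      by (simp add: prob_bind_pmf vimage_def)
    also have "\<dots> \<ge> (1 - e - of_bool (hi < M X1)) - measure_pmf.expectation PZ (\<lambda>Z. of_bool (card {i\<in>A. Z i} < lo))"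
      by (rule expectation_ge[where B=1]) (use ib in auto)
    finally have 1: "measure_pmf.prob (bind_pmf PZ (\<lambda>Z. map_pmf (g X1 Z) P2)) E
        \<ge> (1 - e - of_bool (hi < M X1)) - measure_pmf.prob PZ {Z. card {i\<in>A. Z i} < lo}"
      by (simp add: exp_of_bool)
    have 2: "measure_pmf.prob PZ {Z. card {i\<in>A. Z i} < lo} = measure_pmf.prob (binomial_pmf (card A) \<rho>) {x. x < lo}"
      unfolding PZ_def using finT AT \<rho> by (rule prob_card_subset_binomial)
    have 3: "measure_pmf.prob (binomial_pmf (card A) \<rho>) {x. x < lo} \<le> \<beta> + of_bool (real (M X1) < mid)"
    proof (cases "mid \<le> real (card A)")
      case True
      then show ?thesis using \<beta>[OF True] by simp
    next
      case False
      have "measure_pmf.prob (binomial_pmf (card A) \<rho>) {x. x < lo} \<le> 1" by (rule measure_pmf.prob_le_1)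
      moreover have "of_bool (real (M X1) < mid) = (1::real)" using False by (simp add: M_def A_def)
      ultimately show ?thesis using \<beta>0 by linarith
    qed
    show ?thesis using 1 2 3 by linarith
  qed
  have "measure_pmf.prob (bind_pmf P1 (\<lambda>X1. bind_pmf PZ (\<lambda>Z. map_pmf (g X1 Z) P2))) E
      = measure_pmf.expectation P1 (\<lambda>X1. measure_pmf.prob (bind_pmf PZ (\<lambda>Z. map_pmf (g X1 Z) P2)) E)"
    by (rule prob_bind_pmf)
  also have "\<dots> \<ge> (1 - e - \<beta>) - measure_pmf.expectation P1 (\<lambda>X1. of_bool (hi < M X1) + of_bool (real (M X1) < mid))"
  proof (rule expectation_ge[where B=2])
    fix X1
    show "\<bar>measure_pmf.prob (bind_pmf PZ (\<lambda>Z. map_pmf (g X1 Z) P2)) E\<bar> \<le> 2"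
    proof -
      have a: "measure_pmf.prob (bind_pmf PZ (\<lambda>Z. map_pmf (g X1 Z) P2)) E \<le> 1" by (rule measure_pmf.prob_le_1)
      have b: "0 \<le> measure_pmf.prob (bind_pmf PZ (\<lambda>Z. map_pmf (g X1 Z) P2)) E" by (rule measure_nonneg)
      have c: "\<bar>x\<bar> \<le> 2" if "0 \<le> x" "x \<le> 1" for x :: real using that by simp
      show ?thesis by (rule c[OF b a])
    qed
  qed (use inner in auto)
  finally have main: "measure_pmf.prob (bind_pmf P1 (\<lambda>X1. bind_pmf PZ (\<lambda>Z. map_pmf (g X1 Z) P2))) E
      \<ge> (1 - e - \<beta>) - (measure_pmf.prob P1 {X1. hi < M X1} + measure_pmf.prob P1 {X1. real (M X1) < mid})"
    by (subst (asm) Bochner_Integration.integral_add)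
       (auto intro: pmf_integrable_bounded[where B=1] simp: exp_of_bool)
  have rows: "measure_pmf.prob P1 {X1. Q (M X1)} = measure_pmf.prob (binomial_pmf n \<pi>) {x. Q x}" for Q
  proof -
    have "measure_pmf.prob P1 {X1. Q (M X1)}
       = measure_pmf.prob (map_pmf (\<lambda>X i. i \<in> T \<and> (\<forall>j\<in>S. \<not> X (i,j))) P1) {w. Q (card {i\<in>T. w i})}"
      by (simp add: M_def vimage_def)
    also have "map_pmf (\<lambda>X i. i \<in> T \<and> (\<forall>j\<in>S. \<not> X (i,j))) P1 = Pi_pmf T False (\<lambda>_. bernoulli_pmf \<pi>)"
      unfolding P1_def \<pi>_def S(2)[symmetric] using finT finS q by (rule rows_dist)
    also have "measure_pmf.prob (Pi_pmf T False (\<lambda>_. bernoulli_pmf \<pi>)) {w. Q (card {i\<in>T. w i})}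
       = measure_pmf.prob (binomial_pmf (card T) \<pi>) {x. Q x}"
      using finT \<pi> by (intro prob_card_subset_binomial) auto
    finally show ?thesis by (simp add: cardT)
  qed
  show ?thesis
    using main restruct rows[of "\<lambda>x. hi < x"] rows[of "\<lambda>x. real x < mid"]
    by (simp add: E_def e_def \<pi>_def PZ_def T_def)
qed


lemma ln_ge_one_minus_inv: "0 < (y::real) \<Longrightarrow> 1 - 1 / y \<le> ln y"
proof -
  assume y: "0 < y"
  have "ln (1 / y) \<le> 1 / y - 1" using y by (intro ln_le_minus_one) auto
  then show ?thesis using y by (simp add: ln_div)
qed

lemma binom_lower: "r \<le> m \<Longrightarrow> (real m - real r) ^ r \<le> fact r * real (m choose r)"
proof (induction r)
  case 0
  then show ?case by simp
next
  case (Suc r)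
  have IH: "(real m - real r) ^ r \<le> fact r * real (m choose r)" using Suc by simp
  have eq: "real (m choose Suc r) * real (Suc r) = real (m choose r) * (real m - real r)"
  proof -
    have "(m choose Suc r) * Suc r = (m choose r) * (m - r)"
      by (metis binomial_absorb_comp binomial_absorption mult.commute)
    then show ?thesis using Suc.prems by (metis of_nat_diff of_nat_mult Suc_leD)
  qed
  have "(real m - real (Suc r)) ^ Suc r = (real m - real r - 1) * (real m - real r - 1) ^ r"
    by (simp add: algebra_simps)
  also have "\<dots> \<le> (real m - real r) * (real m - real r) ^ r"
    using Suc.prems by (intro mult_mono power_mono) auto
  also have "\<dots> \<le> (real m - real r) * (fact r * real (m choose r))"
    using Suc.prems IH by (intro mult_left_mono) auto
  also have "\<dots> = fact r * (real (m choose r) * (real m - real r))" by (simp add: algebra_simps)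
  also have "\<dots> = fact r * (real (m choose Suc r) * real (Suc r))" using eq by simp
  also have "\<dots> = fact (Suc r) * real (m choose Suc r)" by (simp add: algebra_simps)
  finally show ?case .
qed

lemma e_le_pow: "exp 1 \<le> (1 + 1 / (real r + 1)) ^ (r + 2)"
proof -
  have pos: "0 < 1 + 1 / (real r + 1)" by (simp add: add_pos_pos)
  have "1 - 1 / (1 + 1 / (real r + 1)) \<le> ln (1 + 1 / (real r + 1))"
    by (rule ln_ge_one_minus_inv[OF pos])
  moreover have "1 - 1 / (1 + 1 / (real r + 1)) = 1 / (real r + 2)"
    by (simp add: field_simps)
  ultimately have l: "1 / (real r + 2) \<le> ln (1 + 1 / (real r + 1))" by simp
  have "1 = real (r + 2) * (1 / (real r + 2))" by simp
  also have "\<dots> \<le> real (r + 2) * ln (1 + 1 / (real r + 1))"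
    by (rule mult_left_mono[OF l]) simp
  finally have "1 \<le> real (r + 2) * ln (1 + 1 / (real r + 1))" .
  then have "exp 1 \<le> exp (real (r + 2) * ln (1 + 1 / (real r + 1)))" by simp
  also have "\<dots> = (1 + 1 / (real r + 1)) ^ (r + 2)"
    by (simp only: exp_of_nat_mult exp_ln[OF pos])
  finally show ?thesis .
qed

lemma fact_upper: "fact r \<le> (real r + 1) ^ (r + 1) * exp (- real r)"
proof (induction r)
  case 0
  then show ?case by simp
next
  case (Suc r)
  have "fact (Suc r) = (real r + 1) * fact r" by simp
  also have "\<dots> \<le> (real r + 1) * ((real r + 1) ^ (r + 1) * exp (- real r))"
    using Suc.IH by (intro mult_left_mono) auto
  also have "\<dots> = (real r + 1) ^ (r + 2) * exp (- real r)" by simp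
  also have "\<dots> \<le> (real r + 2) ^ (r + 2) * exp (- real (Suc r))"
  proof -
    have "(real r + 1) ^ (r + 2) * exp 1 \<le> (real r + 1) ^ (r + 2) * (1 + 1 / (real r + 1)) ^ (r + 2)"
      using e_le_pow[of r] by (intro mult_left_mono) auto
    also have "\<dots> = (real r + 2) ^ (r + 2)"
    proof -
      have "(real r + 1) * (1 + 1 / (real r + 1)) = real r + 2" by (simp add: field_simps)
      then show ?thesis by (simp only: power_mult_distrib[symmetric])
    qed
    finally have "(real r + 1) ^ (r + 2) * exp 1 \<le> (real r + 2) ^ (r + 2)" .
    then have R: "(real r + 1) ^ (r + 2) * exp 1 * exp (- real (Suc r)) \<le> (real r + 2) ^ (r + 2) * exp (- real (Suc r))"
      by (intro mult_right_mono) auto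
    have "exp 1 * exp (- real (Suc r)) = exp (- real r)"
      by (simp add: exp_add[symmetric])
    then have "(real r + 1) ^ (r + 2) * exp (- real r) = (real r + 1) ^ (r + 2) * exp 1 * exp (- real (Suc r))"
      by (simp only: mult.assoc)
    then show ?thesis using R by linarith
  qed
  also have "\<dots> = (real (Suc r) + 1) ^ (Suc r + 1) * exp (- real (Suc r))"
    by (simp add: add.commute)
  finally show ?case .
qed

lemma pow_lower:
  assumes "0 \<le> q" "q < 1"
  shows "exp (- real h * q / (1 - q)) \<le> (1 - q) ^ h"
proof -
  have pos: "0 < 1 - q" using assms by simp
  have "1 - 1 / (1 - q) \<le> ln (1 - q)" by (rule ln_ge_one_minus_inv[OF pos])
  moreover have "1 - 1 / (1 - q) = - q / (1 - q)" using pos by (simp add: field_simps)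
  ultimately have l: "- q / (1 - q) \<le> ln (1 - q)" by simp
  have "- real h * q / (1 - q) = real h * (- q / (1 - q))" by simp
  also have "\<dots> \<le> real h * ln (1 - q)" by (rule mult_left_mono[OF l]) simp
  finally have "- real h * q / (1 - q) \<le> real h * ln (1 - q)" .
  then have "exp (- real h * q / (1 - q)) \<le> exp (real h * ln (1 - q))" by simp
  also have "\<dots> = (1 - q) ^ h" using pos by (simp add: exp_of_nat_mult)
  finally show ?thesis .
qed


lemma core_bound:
  fixes q c \<xi> B L :: real and r lo hi P k :: nat
  assumes q: "0 < q" "q < 1" and c: "0 \<le> c" "real r \<le> c + 1" "c \<le> real r"
    and rlo: "r \<le> lo" and \<xi>: "0 < \<xi>" "\<xi> \<le> 1" "\<xi> \<le> (real lo - real r) * q / (real r + 1)"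
    and B: "real hi * q / (1 - q) \<le> B"
    and P: "k \<le> P" "exp L / 2 \<le> real P - real k"
  shows "exp (L + (c + 1) * ln \<xi> + c - B) / (2 * (c + 2))
         \<le> real (P - k) * (real (lo choose r) * q ^ r * (1 - q) ^ hi)"
proof -
  define x where "x = (real lo - real r) * q / (real r + 1)"
  have x0: "0 \<le> x" using rlo q by (simp add: x_def)
  have fpos: "0 < (fact r :: real)" by simp
  have "(real lo - real r) ^ r / fact r \<le> real (lo choose r)"
    using binom_lower[OF rlo] fpos by (simp add: divide_le_eq mult.commute)
  then have "(real lo - real r) ^ r / fact r * q ^ r \<le> real (lo choose r) * q ^ r"
    using q by (intro mult_right_mono) auto
  moreover have "(real lo - real r) ^ r / fact r * q ^ r = ((real lo - real r) * q) ^ r / fact r"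
    by (simp add: power_mult_distrib)
  moreover have "((real lo - real r) * q) ^ r / ((real r + 1) ^ (r + 1) * exp (- real r)) \<le> ((real lo - real r) * q) ^ r / fact r"
    using fact_upper[of r] fpos rlo q by (intro divide_left_mono mult_pos_pos) auto
  moreover have "((real lo - real r) * q) ^ r / ((real r + 1) ^ (r + 1) * exp (- real r)) = x ^ r * exp (real r) / (real r + 1)"
    by (simp add: x_def power_divide exp_minus field_simps)
  ultimately have A1: "x ^ r * exp (real r) / (real r + 1) \<le> real (lo choose r) * q ^ r" by linarith
  have "\<xi> ^ r \<le> x ^ r" using \<xi> by (intro power_mono) (auto simp: x_def)
  then have A2: "\<xi> ^ r * exp (real r) / (real r + 1) \<le> x ^ r * exp (real r) / (real r + 1)"
    by (intro divide_right_mono mult_right_mono) auto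
  have lnx: "ln \<xi> \<le> 0" using \<xi> by simp
  have "(c + 1) * ln \<xi> + c \<le> real r * ln \<xi> + real r"
  proof -
    have "(c + 1) * ln \<xi> \<le> real r * ln \<xi>" using c lnx by (intro mult_right_mono_neg) auto
    then show ?thesis using c by linarith
  qed
  then have "exp ((c + 1) * ln \<xi> + c) \<le> exp (real r * ln \<xi> + real r)" by simp
  also have "\<dots> = \<xi> ^ r * exp (real r)" using \<xi> by (simp add: exp_add exp_of_nat_mult)
  finally have A3: "exp ((c + 1) * ln \<xi> + c) / (c + 2) \<le> \<xi> ^ r * exp (real r) / (real r + 1)"
    using c \<xi> by (intro frac_le) auto
  have H1: "exp ((c + 1) * ln \<xi> + c) / (c + 2) \<le> real (lo choose r) * q ^ r"
    using A1 A2 A3 by linarith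
  have H2: "exp (- B) \<le> (1 - q) ^ hi"
  proof -
    have "exp (- B) \<le> exp (- real hi * q / (1 - q))" using B by simp
    also have "\<dots> \<le> (1 - q) ^ hi" using q by (intro pow_lower) auto
    finally show ?thesis .
  qed
  have H3: "exp L / 2 \<le> real (P - k)" using P by (simp add: of_nat_diff)
  have "exp (L + (c + 1) * ln \<xi> + c - B) / (2 * (c + 2))
      = (exp L / 2) * ((exp ((c + 1) * ln \<xi> + c) / (c + 2)) * exp (- B))"
    by (simp add: exp_add exp_diff exp_minus field_simps)
  also have "\<dots> \<le> real (P - k) * ((real (lo choose r) * q ^ r) * (1 - q) ^ hi)"
    using H1 H2 H3 c q by (intro mult_mono) (auto intro: mult_nonneg_nonneg)
  finally show ?thesis by (simp add: mult.assoc)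
qed


lemma avg_bound:
  assumes "finite A" "A \<noteq> {}" "\<And>S. S \<in> A \<Longrightarrow> b \<le> measure_pmf.prob (g S) E"
  shows "b \<le> measure_pmf.prob (bind_pmf (pmf_of_set A) g) E"
proof -
  have "measure_pmf.prob (bind_pmf (pmf_of_set A) g) E = (\<Sum>S\<in>A. measure_pmf.prob (g S) E) / card A"
    using assms by (simp add: prob_bind_pmf integral_pmf_of_set)
  moreover have "real (card A) * b \<le> (\<Sum>S\<in>A. measure_pmf.prob (g S) E)"
    using sum_mono[of A "\<lambda>_. b" "\<lambda>S. measure_pmf.prob (g S) E"] assms(3) by simp
  moreover have "0 < real (card A)" using assms by (simp add: card_gt_0_iff)
  ultimately show ?thesis by (simp add: le_divide_eq mult.commute)
qed

lemma hoeff_hi: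
  assumes "0 \<le> \<pi>" "\<pi> \<le> 1" "0 < n" "0 \<le> \<delta>"
  shows "measure_pmf.prob (binomial_pmf n \<pi>) {x. nat \<lfloor>real n * \<pi> * (1 + \<delta>)\<rfloor> < x}
         \<le> exp (- 2 * (real n * \<pi> * \<delta>)\<^sup>2 / real n)"
proof -
  have "{x. nat \<lfloor>real n * \<pi> * (1 + \<delta>)\<rfloor> < x} \<subseteq> {x. real n * \<pi> + real n * \<pi> * \<delta> \<le> real x}"
  proof
    fix x assume "x \<in> {x. nat \<lfloor>real n * \<pi> * (1 + \<delta>)\<rfloor> < x}"
    then have "nat \<lfloor>real n * \<pi> * (1 + \<delta>)\<rfloor> + 1 \<le> x" by simp
    then have "real_of_int \<lfloor>real n * \<pi> * (1 + \<delta>)\<rfloor> + 1 \<le> real x" by linarith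
    moreover have "real n * \<pi> * (1 + \<delta>) < real_of_int \<lfloor>real n * \<pi> * (1 + \<delta>)\<rfloor> + 1" by linarith
    ultimately show "x \<in> {x. real n * \<pi> + real n * \<pi> * \<delta> \<le> real x}" by (simp add: algebra_simps)
  qed
  then have "measure_pmf.prob (binomial_pmf n \<pi>) {x. nat \<lfloor>real n * \<pi> * (1 + \<delta>)\<rfloor> < x}
      \<le> measure_pmf.prob (binomial_pmf n \<pi>) {x. real n * \<pi> + real n * \<pi> * \<delta> \<le> real x}"
    by (intro measure_pmf.finite_measure_mono) auto
  also have "\<dots> \<le> exp (- 2 * (real n * \<pi> * \<delta>)\<^sup>2 / real n)"
    using assms by (intro binomial_distribution.prob_ge) (auto simp: binomial_distribution_def)
  finally show ?thesis .
qed

lemma hoeff_mid: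
  assumes "0 \<le> \<pi>" "\<pi> \<le> 1" "0 < n" "0 \<le> \<delta>"
  shows "measure_pmf.prob (binomial_pmf n \<pi>) {x. real x < real n * \<pi> * (1 - \<delta>)}
         \<le> exp (- 2 * (real n * \<pi> * \<delta>)\<^sup>2 / real n)"
proof -
  have "{x. real x < real n * \<pi> * (1 - \<delta>)} \<subseteq> {x. real x \<le> real n * \<pi> - real n * \<pi> * \<delta>}"
    by (auto simp: algebra_simps)
  then have "measure_pmf.prob (binomial_pmf n \<pi>) {x. real x < real n * \<pi> * (1 - \<delta>)}
      \<le> measure_pmf.prob (binomial_pmf n \<pi>) {x. real x \<le> real n * \<pi> - real n * \<pi> * \<delta>}"
    by (intro measure_pmf.finite_measure_mono) auto
  also have "\<dots> \<le> exp (- 2 * (real n * \<pi> * \<delta>)\<^sup>2 / real n)"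
    using assms by (intro binomial_distribution.prob_le) (auto simp: binomial_distribution_def)
  finally show ?thesis .
qed

lemma hoeff_lo:
  assumes "0 \<le> \<rho>" "\<rho> \<le> 1" "0 < mid" "0 \<le> \<delta>" "\<delta> \<le> 1" "mid \<le> real m"
  shows "measure_pmf.prob (binomial_pmf m \<rho>) {x. x < nat \<lceil>mid * \<rho> * (1 - \<delta>)\<rceil>}
         \<le> exp (- 2 * mid * \<rho>\<^sup>2 * \<delta>\<^sup>2)"
proof -
  have m0: "0 < m" using assms by linarith
  have "{x. x < nat \<lceil>mid * \<rho> * (1 - \<delta>)\<rceil>} \<subseteq> {x. real x \<le> real m * \<rho> - real m * \<rho> * \<delta>}"
  proof
    fix x assume "x \<in> {x. x < nat \<lceil>mid * \<rho> * (1 - \<delta>)\<rceil>}"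
    then have "x + 1 \<le> nat \<lceil>mid * \<rho> * (1 - \<delta>)\<rceil>" by simp
    then have "real x + 1 \<le> real_of_int \<lceil>mid * \<rho> * (1 - \<delta>)\<rceil>" by linarith
    moreover have "real_of_int \<lceil>mid * \<rho> * (1 - \<delta>)\<rceil> < mid * \<rho> * (1 - \<delta>) + 1" by linarith
    moreover have "mid * \<rho> * (1 - \<delta>) \<le> real m * \<rho> * (1 - \<delta>)"
      using assms by (intro mult_right_mono) auto
    ultimately show "x \<in> {x. real x \<le> real m * \<rho> - real m * \<rho> * \<delta>}" by (simp add: algebra_simps)
  qed
  then have "measure_pmf.prob (binomial_pmf m \<rho>) {x. x < nat \<lceil>mid * \<rho> * (1 - \<delta>)\<rceil>}
      \<le> measure_pmf.prob (binomial_pmf m \<rho>) {x. real x \<le> real m * \<rho> - real m * \<rho> * \<delta>}"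
    by (intro measure_pmf.finite_measure_mono) auto
  also have "\<dots> \<le> exp (- 2 * (real m * \<rho> * \<delta>)\<^sup>2 / real m)"
    using assms m0 by (intro binomial_distribution.prob_le) (auto simp: binomial_distribution_def)
  also have "- 2 * (real m * \<rho> * \<delta>)\<^sup>2 / real m = - 2 * real m * \<rho>\<^sup>2 * \<delta>\<^sup>2"
    using m0 by (simp add: power2_eq_square field_simps)
  also have "exp (- 2 * real m * \<rho>\<^sup>2 * \<delta>\<^sup>2) \<le> exp (- 2 * mid * \<rho>\<^sup>2 * \<delta>\<^sup>2)"
  proof -
    have "mid * (\<rho>\<^sup>2 * \<delta>\<^sup>2) \<le> real m * (\<rho>\<^sup>2 * \<delta>\<^sup>2)" using assms by (intro mult_right_mono) auto
    then show ?thesis by (simp add: mult.assoc)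
  qed
  finally show ?thesis .
qed


theorem lemma3:
  fixes \<theta> \<nu> \<rho> \<gamma> \<Phi> :: real and k :: "nat \<Rightarrow> nat"
  assumes "0 < \<theta>" "\<theta> < 1" "0 < \<nu>" "0 < \<rho>" "\<rho> < 1" "0 < \<gamma>" "\<rho> < \<Phi>"
    and "(\<lambda>p. real (k p)) \<in> \<Theta>(\<lambda>p. real p powr \<theta>)"
    and "\<gamma> * \<nu> * exp (- \<nu>) * (Dfun \<rho> \<Phi> + 1 - \<rho>) < 1"
  shows "((\<lambda>p. let n = nat \<lceil>\<gamma> * real (k p) * ln (real p)\<rceil>;
                  c = \<Phi> * \<nu> * exp (- \<nu>) * \<gamma> * ln (real p) in
           measure_pmf.prob (gt_pmf p (k p) n \<nu> \<rho>)
             {(S, X, Y). \<exists>j. intruding_possible_defective p n S X Y j \<and> real (N_fp n S X Y j) > c})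
         \<longlongrightarrow> 1) at_top"
proof -
  note \<theta>0 = assms(1) and \<theta>1 = assms(2) and \<nu>0 = assms(3) and \<rho>0 = assms(4) and \<rho>1 = assms(5)
    and \<gamma>0 = assms(6) and \<Phi>\<rho> = assms(7) and k\<Theta> = assms(8) and hyp = assms(9)
  have \<Phi>0: "0 < \<Phi>" using \<rho>0 \<Phi>\<rho> by linarith
  define a where "a = exp (- \<nu>)"
  define \<alpha> where "\<alpha> = \<gamma> * \<nu> * a"
  have a0: "0 < a" and a1: "a \<le> 1" using \<nu>0 by (auto simp: a_def)
  have \<alpha>0: "0 < \<alpha>" using \<gamma>0 \<nu>0 a0 by (simp add: \<alpha>_def)
  define slack where "slack = 1 - \<alpha> * (Dfun \<rho> \<Phi> + 1 - \<rho>)"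
  have slack0: "0 < slack" using hyp by (simp add: slack_def \<alpha>_def a_def)
  have slack_eq: "slack = 1 + \<Phi> * \<alpha> * ln (\<rho> / \<Phi>) + \<Phi> * \<alpha> - \<alpha>"
  proof -
    have "ln (\<Phi> / \<rho>) = - ln (\<rho> / \<Phi>)" using \<rho>0 \<Phi>0 by (simp add: ln_div)
    then show ?thesis by (simp add: slack_def Dfun_def algebra_simps)
  qed
  define \<delta> where "\<delta> = min (1/2) (slack / (2 * (8 * \<Phi> * \<alpha> + 3 * \<alpha>)))"
  have den0: "0 < 2 * (8 * \<Phi> * \<alpha> + 3 * \<alpha>)" using \<Phi>0 \<alpha>0 by (intro mult_pos_pos add_pos_pos) auto
  have \<delta>0: "0 < \<delta>" using slack0 den0 by (simp add: \<delta>_def)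
  have \<delta>1: "\<delta> \<le> 1/2" unfolding \<delta>_def by (rule min.cobounded1)
  have \<delta>2: "\<delta> * (8 * \<Phi> * \<alpha> + 3 * \<alpha>) \<le> slack / 2"
  proof -
    have "\<delta> \<le> slack / (2 * (8 * \<Phi> * \<alpha> + 3 * \<alpha>))" unfolding \<delta>_def by (rule min.cobounded2)
    then have "\<delta> * (2 * (8 * \<Phi> * \<alpha> + 3 * \<alpha>)) \<le> slack" using den0 by (simp add: le_divide_eq)
    then show ?thesis by (simp add: algebra_simps)
  qed
  define \<xi> where "\<xi> = \<rho> * (1 - \<delta>) ^ 4 / \<Phi>"
  have \<xi>0: "0 < \<xi>" using \<rho>0 \<Phi>0 \<delta>1 by (simp add: \<xi>_def)
  have \<xi>1: "\<xi> \<le> 1"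
  proof -
    have "(1 - \<delta>) ^ 4 \<le> 1" using \<delta>0 \<delta>1 by (intro power_le_one) auto
    then have "\<rho> * (1 - \<delta>) ^ 4 \<le> \<rho> * 1" using \<rho>0 by (intro mult_left_mono) auto
    then have "\<rho> * (1 - \<delta>) ^ 4 \<le> \<Phi>" using \<Phi>\<rho> by linarith
    then show ?thesis using \<Phi>0 by (simp add: \<xi>_def)
  qed
  have ln\<xi>: "ln (\<rho> / \<Phi>) - 8 * \<delta> \<le> ln \<xi>"
  proof -
    have p1: "0 < 1 - \<delta>" using \<delta>1 by simp
    have "ln \<xi> = ln (\<rho> / \<Phi>) + 4 * ln (1 - \<delta>)"
      using \<rho>0 \<Phi>0 p1 by (simp add: \<xi>_def ln_mult ln_div ln_realpow)
    moreover have "1 - 1 / (1 - \<delta>) \<le> ln (1 - \<delta>)" by (rule ln_ge_one_minus_inv[OF p1])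
    moreover have "- 2 * \<delta> \<le> 1 - 1 / (1 - \<delta>)"
      using \<delta>0 \<delta>1 p1 by (simp add: field_simps)
    ultimately show ?thesis by linarith
  qed
  define \<kappa> where "\<kappa> = slack / 2"
  have \<kappa>0: "0 < \<kappa>" using slack0 by (simp add: \<kappa>_def)
  have brk: "\<kappa> \<le> 1 + \<Phi> * \<alpha> * ln \<xi> + \<Phi> * \<alpha> - (1 + \<delta>)\<^sup>2 * \<alpha>"
  proof -
    have 1: "\<Phi> * \<alpha> * (ln (\<rho> / \<Phi>) - 8 * \<delta>) \<le> \<Phi> * \<alpha> * ln \<xi>"
      using ln\<xi> \<Phi>0 \<alpha>0 by (intro mult_left_mono) auto
    have "(1 + \<delta>)\<^sup>2 \<le> 1 + 3 * \<delta>"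
      using \<delta>0 \<delta>1 by (simp add: power2_eq_square algebra_simps)
    then have 2: "(1 + \<delta>)\<^sup>2 * \<alpha> \<le> (1 + 3 * \<delta>) * \<alpha>" using \<alpha>0 by (intro mult_right_mono) auto
    show ?thesis using 1 2 \<delta>2 slack_eq unfolding \<kappa>_def by (simp add: algebra_simps)
  qed
  define K where "K p = real (k p)" for p
  from bigthetaD2[OF k\<Theta>] obtain C1 where C1: "C1 > 0"
    "eventually (\<lambda>p. norm (real (k p)) \<ge> C1 * norm (real p powr \<theta>)) at_top"
    by (elim landau_omega.bigE)
  from bigthetaD1[OF k\<Theta>] obtain C2 where C2: "C2 > 0"
    "eventually (\<lambda>p. norm (real (k p)) \<le> C2 * norm (real p powr \<theta>)) at_top"
    by (elim landau_o.bigE)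
  have evC1: "eventually (\<lambda>p. C1 * real p powr \<theta> \<le> K p) at_top"
    using C1(2) by eventually_elim (simp add: K_def)
  have evC2: "eventually (\<lambda>p. K p \<le> C2 * real p powr \<theta>) at_top"
    using C2(2) by eventually_elim (simp add: K_def)
  have lim1: "filterlim (\<lambda>p::nat. C1 * real p powr \<theta>) at_top at_top"
    using C1(1) \<theta>0 by real_asymp
  have Kinf: "filterlim K at_top at_top"
    by (rule filterlim_at_top_mono[OF lim1 evC1])
  have evK: "eventually (\<lambda>p. B \<le> K p) at_top" for B
    using Kinf by (simp add: filterlim_at_top)
  have kinf: "filterlim k at_top at_top"
    unfolding filterlim_at_top
  proof
    fix N :: nat
    show "eventually (\<lambda>p. N \<le> k p) at_top"
      using evK[of "real N"] by eventually_elim (simp add: K_def)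
  qed
  have LK: "((\<lambda>p. ln (real p) / K p) \<longlongrightarrow> 0) at_top"
  proof (rule tendsto_sandwich[of "\<lambda>_. 0" _ _ "\<lambda>p. ln (real p) / (C1 * real p powr \<theta>)"])
    show "eventually (\<lambda>p. 0 \<le> ln (real p) / K p) at_top"
      using evK[of 1] eventually_ge_at_top[of "1::nat"] by eventually_elim auto
    show "eventually (\<lambda>p. ln (real p) / K p \<le> ln (real p) / (C1 * real p powr \<theta>)) at_top"
      using evC1 eventually_ge_at_top[of "1::nat"]
    proof eventually_elim
      case (elim p)
      have "0 < real p powr \<theta>" using elim by simp
      then have c: "0 < C1 * real p powr \<theta>" using C1(1) by simp
      then have "0 < K p" using elim by linarith
      then show ?case using c elim by (intro divide_left_mono) (auto intro: mult_pos_pos)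
    qed
    show "((\<lambda>p::nat. ln (real p) / (C1 * real p powr \<theta>)) \<longlongrightarrow> 0) at_top"
      using C1(1) \<theta>0 by real_asymp
  qed simp
  have evLK: "eventually (\<lambda>p. ln (real p) / K p \<le> e) at_top" if "0 < e" for e
    using order_tendstoD(2)[OF LK that] by eventually_elim simp
  have evhalf: "eventually (\<lambda>p. K p \<le> real p / 2) at_top"
  proof -
    have "eventually (\<lambda>p::nat. C2 * real p powr \<theta> \<le> real p / 2) at_top"
      using C2(1) \<theta>0 \<theta>1 by real_asymp
    with evC2 show ?thesis by eventually_elim simp
  qed
  have evL: "eventually (\<lambda>p::nat. B \<le> ln (real p)) at_top" for B
    by real_asymp
  have evpi: "eventually (\<lambda>p. a * (1 - \<delta>) \<le> (1 - \<nu> / K p) ^ k p) at_top"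
  proof -
    have "((\<lambda>m. (1 + (- \<nu>) / real m) ^ m) \<longlongrightarrow> exp (- \<nu>)) at_top"
      by (rule tendsto_exp_limit_sequentially)
    then have "((\<lambda>p. (1 + (- \<nu>) / real (k p)) ^ k p) \<longlongrightarrow> a) at_top"
      unfolding a_def by (rule filterlim_compose[OF _ kinf])
    moreover have "a * (1 - \<delta>) < a" using a0 \<delta>0 by simp
    ultimately have "eventually (\<lambda>p. a * (1 - \<delta>) < (1 + (- \<nu>) / real (k p)) ^ k p) at_top"
      by (rule order_tendstoD(1))
    then show ?thesis by eventually_elim (simp add: K_def)
  qed
  define F where "F = (\<lambda>p. let n = nat \<lceil>\<gamma> * real (k p) * ln (real p)\<rceil>;
                  c = \<Phi> * \<nu> * exp (- \<nu>) * \<gamma> * ln (real p) in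
           measure_pmf.prob (gt_pmf p (k p) n \<nu> \<rho>)
             {(S, X, Y). \<exists>j. intruding_possible_defective p n S X Y j \<and> real (N_fp n S X Y j) > c})"
  define \<mu> where "\<mu> = 2 * \<gamma> * (a * (1 - \<delta>))\<^sup>2 * \<delta>\<^sup>2"
  define \<mu>' where "\<mu>' = 2 * \<gamma> * a * (1 - \<delta>)\<^sup>2 * \<rho>\<^sup>2 * \<delta>\<^sup>2"
  define G where "G p = exp (\<kappa> * ln (real p) + ln \<xi> - 1) / (2 * (\<Phi> * \<alpha> * ln (real p) + 2))" for p :: nat
  define LB where "LB p = 1 - exp (- G p) - 2 * exp (- \<mu> * K p) - exp (- \<mu>' * K p)" for p
  have \<delta>3: "0 < 1 - \<delta>" using \<delta>1 by simp
  have t0: "0 < \<alpha> * \<rho> * (1 - \<delta>) ^ 3 * \<delta>" using \<alpha>0 \<rho>0 \<delta>3 \<delta>0 by simp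
  have e0: "0 < 1 / (2 * (\<Phi> * \<alpha> * \<nu>))" using \<Phi>0 \<alpha>0 \<nu>0 by simp
  have evLB: "eventually (\<lambda>p. LB p \<le> F p) at_top"
    using evL[of 1] evK[of "\<nu> * (1 + \<delta>) / \<delta>"] evpi evhalf evLK[OF e0]
      evK[of "2 * \<nu>"] evL[of "(1 + 2 * \<rho> / \<Phi>) / (\<alpha> * \<rho> * (1 - \<delta>) ^ 3 * \<delta>)"]
      evK[of "(1 + \<delta>)\<^sup>2 * a * \<nu>"]
  proof eventually_elim
    case (elim p)
    define Kp where "Kp = K p"
    define Lp where "Lp = ln (real p)"
    define kp where "kp = k p"
    have Kp_def': "Kp = real kp" by (simp add: Kp_def kp_def K_def)
    note hL = elim(1)[folded Lp_def]
    note hK = elim(2)[folded Kp_def]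
    note h\<pi> = elim(3)[folded Kp_def kp_def]
    note hhalf = elim(4)[folded Kp_def]
    note hLK = elim(5)[folded Kp_def Lp_def]
    note hK2 = elim(6)[folded Kp_def]
    note hL2 = elim(7)[folded Lp_def]
    note hK3 = elim(8)[folded Kp_def]
    have p0: "0 < p"
    proof (rule ccontr)
      assume "\<not> 0 < p" then have "p = 0" by simp
      then show False using hL by (simp add: Lp_def)
    qed
    have expL: "exp Lp = real p" using p0 by (simp add: Lp_def)
    have L0: "0 \<le> Lp" using hL by simp
    have c0': "0 < \<nu> * (1 + \<delta>) / \<delta>" using \<nu>0 \<delta>0 by simp
    have Kpos: "0 < Kp" using hK c0' by linarith
    have kpos: "0 < kp" using Kpos Kp_def' by simp
    define qq where "qq = \<nu> / Kp"
    have q0: "0 < qq" using \<nu>0 Kpos by (simp add: qq_def)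
    have "\<nu> * (1 + \<delta>) \<le> Kp * \<delta>" using hK \<delta>0 by (simp add: divide_le_eq)
    then have q\<delta>: "qq \<le> \<delta> / (1 + \<delta>)" using Kpos \<delta>0 by (simp add: qq_def field_simps)
    have q1: "qq < 1"
    proof -
      have "\<delta> / (1 + \<delta>) < 1" using \<delta>0 by simp
      then show ?thesis using q\<delta> by linarith
    qed
    have inv1q: "1 / (1 - qq) \<le> 1 + \<delta>"
    proof -
      have "1 / (1 + \<delta>) \<le> 1 - qq"
      proof -
        have "1 - \<delta> / (1 + \<delta>) = 1 / (1 + \<delta>)" using \<delta>0 by (simp add: field_simps)
        then show ?thesis using q\<delta> by linarith
      qed
      then show ?thesis using \<delta>0 q1 by (simp add: divide_le_eq field_simps)
    qed
    have K\<nu>: "\<nu> \<le> Kp" using q1 Kpos \<nu>0 by (simp add: qq_def divide_less_eq)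
    define \<pi> where "\<pi> = (1 - qq) ^ kp"
    have \<pi>le: "\<pi> \<le> a"
    proof -
      have "(1 + (- \<nu>) / real kp) ^ kp \<le> exp (- \<nu>)"
        using K\<nu> kpos Kp_def' by (intro exp_ge_one_plus_x_over_n_power_n) auto
      then show ?thesis by (simp add: \<pi>_def qq_def Kp_def' a_def)
    qed
    have \<pi>ge: "a * (1 - \<delta>) \<le> \<pi>" using h\<pi> by (simp add: \<pi>_def qq_def)
    have \<pi>0: "0 \<le> \<pi>" and \<pi>1: "\<pi> \<le> 1" using q0 q1 by (auto simp: \<pi>_def intro: power_le_one)
    have a\<delta>0: "0 < a * (1 - \<delta>)" using a0 \<delta>3 by simp
    define n where "n = nat \<lceil>\<gamma> * Kp * Lp\<rceil>"
    have n1: "\<gamma> * Kp * Lp \<le> real n" by (simp add: n_def; linarith)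
    have n2: "real n \<le> \<gamma> * Kp * Lp + 1" using \<gamma>0 Kpos L0 by (simp add: n_def; linarith)
    have n0: "0 < n" using n1 \<gamma>0 Kpos hL by (smt (verit) mult_pos_pos of_nat_0_less_iff)
    have nK: "\<gamma> * Kp \<le> real n" using n1 \<gamma>0 Kpos hL by (smt (verit) mult_le_cancel_left1 mult_pos_pos)
    define c where "c = \<Phi> * \<nu> * exp (- \<nu>) * \<gamma> * Lp"
    have c_eq: "c = \<Phi> * \<alpha> * Lp" by (simp add: c_def \<alpha>_def a_def)
    have c0: "0 \<le> c" using c_eq \<Phi>0 \<alpha>0 L0 by simp
    define r where "r = nat \<lfloor>c\<rfloor> + 1"
    have rr: "real r = real_of_int \<lfloor>c\<rfloor> + 1" unfolding r_def using c0 by simp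
    have r1: "real r \<le> c + 1" using rr of_int_floor_le[of c] by linarith
    have r2: "c < real r" using rr real_of_int_floor_add_one_gt[of c] by linarith
    define mid where "mid = real n * \<pi> * (1 - \<delta>)"
    have mid_ge: "\<gamma> * Kp * Lp * (a * (1 - \<delta>)) * (1 - \<delta>) \<le> mid"
      unfolding mid_def using n1 \<pi>ge \<delta>3 \<gamma>0 Kpos L0 a\<delta>0
      by (intro mult_right_mono mult_mono) auto
    have mid0: "0 < mid"
      using mid_ge \<gamma>0 Kpos hL a\<delta>0 \<delta>3 by (smt (verit) mult_pos_pos)
    define lo where "lo = nat \<lceil>mid * \<rho> * (1 - \<delta>)\<rceil>"
    have lo1: "mid * \<rho> * (1 - \<delta>) \<le> real lo" by (simp add: lo_def; linarith)
    define hi where "hi = nat \<lfloor>real n * \<pi> * (1 + \<delta>)\<rfloor>"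
    have hi1: "real hi \<le> real n * \<pi> * (1 + \<delta>)"
      using \<pi>0 \<delta>0 by (simp add: hi_def; smt (verit) floor_le_iff mult_nonneg_nonneg of_nat_0_le_iff)
    have tq: "\<alpha> * \<rho> * (1 - \<delta>) ^ 3 * Lp \<le> real lo * qq"
    proof -
      have "\<gamma> * Kp * Lp * (a * (1 - \<delta>)) * (1 - \<delta>) * \<rho> * (1 - \<delta>) \<le> mid * \<rho> * (1 - \<delta>)"
        using mid_ge \<rho>0 \<delta>3 by (intro mult_right_mono) auto
      also have "\<dots> \<le> real lo" by (rule lo1)
      finally have "\<gamma> * Kp * Lp * (a * (1 - \<delta>)) * (1 - \<delta>) * \<rho> * (1 - \<delta>) * qq \<le> real lo * qq"
        using q0 by (intro mult_right_mono) auto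
      moreover have "\<gamma> * Kp * Lp * (a * (1 - \<delta>)) * (1 - \<delta>) * \<rho> * (1 - \<delta>) * qq = \<alpha> * \<rho> * (1 - \<delta>) ^ 3 * Lp"
        using Kpos by (simp add: qq_def \<alpha>_def power3_eq_cube field_simps)
      ultimately show ?thesis by simp
    qed
    have rq: "real r * qq \<le> 1"
    proof -
      have "\<Phi> * \<alpha> * \<nu> * (Lp / Kp) \<le> \<Phi> * \<alpha> * \<nu> * (1 / (2 * (\<Phi> * \<alpha> * \<nu>)))"
        using hLK \<Phi>0 \<alpha>0 \<nu>0 by (intro mult_left_mono) auto
      also have "\<dots> = 1 / 2" using \<Phi>0 \<alpha>0 \<nu>0 by simp
      finally have 1: "\<Phi> * \<alpha> * \<nu> * (Lp / Kp) \<le> 1 / 2" .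
      have 2: "\<nu> / Kp \<le> 1 / 2" using hK2 Kpos \<nu>0 by (simp add: divide_le_eq)
      have "real r * qq \<le> (c + 1) * qq" using r1 q0 by (intro mult_right_mono) auto
      also have "\<dots> = \<Phi> * \<alpha> * \<nu> * (Lp / Kp) + \<nu> / Kp" using Kpos by (simp add: c_eq qq_def field_simps)
      finally show ?thesis using 1 2 by linarith
    qed
    have tb: "1 + 2 * \<rho> / \<Phi> \<le> \<alpha> * \<rho> * (1 - \<delta>) ^ 3 * \<delta> * Lp"
      using hL2 t0 by (simp add: divide_le_eq mult.commute)
    have xi_r: "\<xi> * (real r + 1) \<le> (real lo - real r) * qq"
    proof -
      have "\<xi> * (real r + 1) \<le> \<xi> * (c + 2)" using r1 \<xi>0 by (intro mult_left_mono) auto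
      also have "\<dots> = \<alpha> * \<rho> * (1 - \<delta>) ^ 4 * Lp + 2 * \<rho> * (1 - \<delta>) ^ 4 / \<Phi>"
        using \<Phi>0 by (simp add: \<xi>_def c_eq field_simps)
      also have "2 * \<rho> * (1 - \<delta>) ^ 4 / \<Phi> \<le> 2 * \<rho> / \<Phi>"
      proof -
        have "(1 - \<delta>) ^ 4 \<le> 1" using \<delta>0 \<delta>1 by (intro power_le_one) auto
        then have "2 * \<rho> * (1 - \<delta>) ^ 4 \<le> 2 * \<rho>" using \<rho>0 by (simp add: mult_left_le)
        then show ?thesis using \<Phi>0 by (simp add: divide_right_mono)
      qed
      also have "\<alpha> * \<rho> * (1 - \<delta>) ^ 4 * Lp = \<alpha> * \<rho> * (1 - \<delta>) ^ 3 * Lp - \<alpha> * \<rho> * (1 - \<delta>) ^ 3 * \<delta> * Lp"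
      proof -
        have pw: "(1 - \<delta>) ^ 4 = (1 - \<delta>) ^ 3 * (1 - \<delta>)" by (subst power_Suc2[symmetric]) simp
        show ?thesis unfolding pw by (simp add: algebra_simps)
      qed
      finally have "\<xi> * (real r + 1) \<le> \<alpha> * \<rho> * (1 - \<delta>) ^ 3 * Lp - \<alpha> * \<rho> * (1 - \<delta>) ^ 3 * \<delta> * Lp + 2 * \<rho> / \<Phi>"
        by simp
      also have "\<dots> \<le> real lo * qq - 1" using tq tb by linarith
      also have "\<dots> \<le> real lo * qq - real r * qq" using rq by linarith
      finally show ?thesis by (simp add: algebra_simps)
    qed
    have rlo: "r \<le> lo"
    proof -
      have "0 < \<xi> * (real r + 1)" using \<xi>0 by simp
      then have "0 < (real lo - real r) * qq" using xi_r by linarith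
      then have "real r < real lo" using q0 by (simp add: zero_less_mult_iff)
      then show ?thesis by simp
    qed
    have xi_cond: "\<xi> \<le> (real lo - real r) * qq / (real r + 1)"
      using xi_r by (simp add: le_divide_eq add_pos_nonneg)
    define B where "B = (1 + \<delta>)\<^sup>2 * \<alpha> * Lp + 1"
    have Bc: "real hi * qq / (1 - qq) \<le> B"
    proof -
      have "real hi * qq \<le> real n * \<pi> * (1 + \<delta>) * qq" using hi1 q0 by (intro mult_right_mono) auto
      also have "\<dots> \<le> (\<gamma> * Kp * Lp + 1) * a * (1 + \<delta>) * qq"
        using n2 \<pi>le \<pi>0 q0 \<delta>0 by (intro mult_right_mono mult_mono) auto
      also have "\<dots> = (1 + \<delta>) * \<alpha> * Lp + (1 + \<delta>) * a * \<nu> / Kp"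
        using Kpos by (simp add: qq_def \<alpha>_def field_simps)
      finally have 1: "real hi * qq \<le> (1 + \<delta>) * \<alpha> * Lp + (1 + \<delta>) * a * \<nu> / Kp" .
      have q1': "0 < 1 - qq" using q1 by simp
      have "real hi * qq / (1 - qq) = real hi * qq * (1 / (1 - qq))" by simp
      also have "\<dots> \<le> ((1 + \<delta>) * \<alpha> * Lp + (1 + \<delta>) * a * \<nu> / Kp) * (1 + \<delta>)"
      proof -
        have "0 \<le> real hi * qq" using q0 by simp
        then have "0 \<le> (1 + \<delta>) * \<alpha> * Lp + (1 + \<delta>) * a * \<nu> / Kp" using 1 by linarith
        then show ?thesis using 1 inv1q q1' q0 by (intro mult_mono) auto
      qed
      also have "\<dots> = (1 + \<delta>)\<^sup>2 * \<alpha> * Lp + (1 + \<delta>)\<^sup>2 * a * \<nu> / Kp"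
        by (simp add: power2_eq_square algebra_simps)
      also have "(1 + \<delta>)\<^sup>2 * a * \<nu> / Kp \<le> 1" using hK3 Kpos by (simp add: divide_le_eq)
      finally show ?thesis by (simp add: B_def)
    qed
    have kp_le: "kp \<le> p" using hhalf Kp_def' Kpos by simp
    have Pc: "exp Lp / 2 \<le> real p - real kp" using hhalf expL Kp_def' by simp
    define H where "H = real (lo choose r) * qq ^ r * (1 - qq) ^ hi"
    have core: "exp (Lp + (c + 1) * ln \<xi> + c - B) / (2 * (c + 2)) \<le> real (p - kp) * H"
      unfolding H_def using q0 q1 c0 r1 r2 rlo \<xi>0 \<xi>1 xi_cond Bc kp_le Pc
      by (intro core_bound) auto
    have expo: "\<kappa> * Lp + ln \<xi> - 1 \<le> Lp + (c + 1) * ln \<xi> + c - B"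
    proof -
      have "\<kappa> * Lp \<le> (1 + \<Phi> * \<alpha> * ln \<xi> + \<Phi> * \<alpha> - (1 + \<delta>)\<^sup>2 * \<alpha>) * Lp"
        using brk L0 by (intro mult_right_mono) auto
      then show ?thesis by (simp add: c_eq B_def algebra_simps)
    qed
    have Gle: "G p \<le> real (p - kp) * H"
    proof -
      have "G p = exp (\<kappa> * Lp + ln \<xi> - 1) / (2 * (c + 2))" by (simp add: G_def c_eq Lp_def)
      also have "\<dots> \<le> exp (Lp + (c + 1) * ln \<xi> + c - B) / (2 * (c + 2))"
        using expo c0 by (intro divide_right_mono) auto
      finally show ?thesis using core by linarith
    qed
    define e2 where "e2 = exp (- 2 * (real n * \<pi> * \<delta>)\<^sup>2 / real n)"
    define \<beta> where "\<beta> = exp (- 2 * mid * \<rho>\<^sup>2 * \<delta>\<^sup>2)"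
    have \<beta>c: "measure_pmf.prob (binomial_pmf m \<rho>) {x. x < lo} \<le> \<beta>" if "mid \<le> real m" for m
      unfolding lo_def \<beta>_def using \<rho>0 \<rho>1 mid0 \<delta>0 \<delta>1 that by (intro hoeff_lo) auto
    have \<beta>0: "0 \<le> \<beta>" by (simp add: \<beta>_def)
    have Phi: "measure_pmf.prob (binomial_pmf n ((1 - qq) ^ kp)) {x. hi < x} \<le> e2"
      unfolding hi_def e2_def \<pi>_def[symmetric] using \<pi>0 \<pi>1 n0 \<delta>0 by (intro hoeff_hi) auto
    have Pmid: "measure_pmf.prob (binomial_pmf n ((1 - qq) ^ kp)) {x. real x < mid} \<le> e2"
      unfolding mid_def e2_def \<pi>_def[symmetric] using \<pi>0 \<pi>1 n0 \<delta>0 by (intro hoeff_mid) auto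
    define E where "E = {(S, X, Y). \<exists>j. intruding_possible_defective p n S X Y j \<and> real (N_fp n S X Y j) > c}"
    have Fp: "F p = measure_pmf.prob (gt_pmf p kp n \<nu> \<rho>) E"
      by (simp add: F_def Let_def n_def c_def E_def Kp_def K_def Lp_def kp_def)
    have fam: "finite {S. S \<subseteq> {1..p} \<and> card S = kp}" by simp
    obtain S0 where S0: "S0 \<subseteq> {1..p}" "card S0 = kp"
      using obtain_subset_with_card_n[of kp "{1..p}"] kp_le by auto
    have famne: "{S. S \<subseteq> {1..p} \<and> card S = kp} \<noteq> {}" using S0 by auto
    have qq_eq: "qq = \<nu> / real kp" by (simp add: qq_def Kp_def')
    have q01: "0 \<le> qq" "qq \<le> 1" using q0 q1 by auto
    have "1 - exp (- real (p - kp) * H) - e2 - e2 - \<beta> \<le> measure_pmf.prob (gt_pmf p kp n \<nu> \<rho>) E"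
      unfolding gt_pmf_def
    proof (rule avg_bound[OF fam famne])
      fix S assume "S \<in> {S. S \<subseteq> {1..p} \<and> card S = kp}"
      then have S: "S \<subseteq> {1..p}" "card S = kp" by auto
      have "1 - exp (- real (p - kp) * (real (lo choose r) * qq ^ r * (1 - qq) ^ hi))
          - measure_pmf.prob (binomial_pmf n ((1 - qq) ^ kp)) {x. hi < x}
          - measure_pmf.prob (binomial_pmf n ((1 - qq) ^ kp)) {x. real x < mid} - \<beta>
        \<le> measure_pmf.prob (bind_pmf (Pi_pmf ({0..<n} \<times> {1..p}) False (\<lambda>_. bernoulli_pmf qq)) (\<lambda>X.
           bind_pmf (Pi_pmf {0..<n} False (\<lambda>_. bernoulli_pmf \<rho>)) (\<lambda>Z.
           return_pmf (S, X, (\<lambda>i. noiseless_outcome S X i \<or> Z i))))) E"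
        unfolding E_def using S q01 \<rho>0 \<rho>1 r2 \<beta>c \<beta>0 by (intro per_S) auto
      then show "1 - exp (- real (p - kp) * H) - e2 - e2 - \<beta>
        \<le> measure_pmf.prob (bind_pmf (Pi_pmf ({0..<n} \<times> {1..p}) False (\<lambda>_. bernoulli_pmf (\<nu> / real kp))) (\<lambda>X.
           bind_pmf (Pi_pmf {0..<n} False (\<lambda>_. bernoulli_pmf \<rho>)) (\<lambda>Z.
           return_pmf (S, X, (\<lambda>i. noiseless_outcome S X i \<or> Z i))))) E"
        using Phi Pmid unfolding H_def qq_eq by linarith
    qed
    then have Fb: "1 - exp (- real (p - kp) * H) - e2 - e2 - \<beta> \<le> F p" using Fp by simp
    have b1: "exp (- real (p - kp) * H) \<le> exp (- G p)" using Gle by simp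
    have b2: "e2 \<le> exp (- \<mu> * Kp)"
    proof -
      have "\<gamma> * Kp * (a * (1 - \<delta>))\<^sup>2 \<le> real n * \<pi>\<^sup>2"
        using nK \<pi>ge a\<delta>0 \<gamma>0 Kpos by (intro mult_mono power_mono) auto
      then have X: "\<gamma> * Kp * (a * (1 - \<delta>))\<^sup>2 * (2 * \<delta>\<^sup>2) \<le> real n * \<pi>\<^sup>2 * (2 * \<delta>\<^sup>2)"
        by (intro mult_right_mono) auto
      have eq1: "\<mu> * Kp = \<gamma> * Kp * (a * (1 - \<delta>))\<^sup>2 * (2 * \<delta>\<^sup>2)" by (simp only: \<mu>_def mult_ac)
      have eq2: "2 * real n * \<pi>\<^sup>2 * \<delta>\<^sup>2 = real n * \<pi>\<^sup>2 * (2 * \<delta>\<^sup>2)" by (simp only: mult_ac)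
      have "\<mu> * Kp \<le> 2 * real n * \<pi>\<^sup>2 * \<delta>\<^sup>2" using X unfolding eq1 eq2 .
      moreover have "- 2 * (real n * \<pi> * \<delta>)\<^sup>2 / real n = - (2 * real n * \<pi>\<^sup>2 * \<delta>\<^sup>2)"
        using n0 by (simp add: power2_eq_square field_simps)
      ultimately show ?thesis unfolding e2_def by simp
    qed
    have b3: "\<beta> \<le> exp (- \<mu>' * Kp)"
    proof -
      have "\<gamma> * Kp * (a * (1 - \<delta>)) * (1 - \<delta>) \<le> \<gamma> * Kp * Lp * (a * (1 - \<delta>)) * (1 - \<delta>)"
        using hL \<gamma>0 Kpos a\<delta>0 \<delta>3 by (intro mult_right_mono) (auto intro: mult_left_le)
      then have "\<gamma> * Kp * (a * (1 - \<delta>)) * (1 - \<delta>) \<le> mid" using mid_ge by linarith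
      then have "\<gamma> * Kp * (a * (1 - \<delta>)) * (1 - \<delta>) * (2 * \<rho>\<^sup>2 * \<delta>\<^sup>2) \<le> mid * (2 * \<rho>\<^sup>2 * \<delta>\<^sup>2)"
        by (intro mult_right_mono) auto
      then have "\<mu>' * Kp \<le> 2 * mid * \<rho>\<^sup>2 * \<delta>\<^sup>2"
        unfolding \<mu>'_def by (simp add: power2_eq_square algebra_simps)
      then show ?thesis unfolding \<beta>_def by simp
    qed
    show ?case using Fb b1 b2 b3 unfolding LB_def Kp_def by linarith
  qed
  have evF1: "eventually (\<lambda>p. F p \<le> 1) at_top"
    by (intro always_eventually allI) (simp add: F_def Let_def)
  have lim1: "((\<lambda>p. exp (- G p)) \<longlongrightarrow> 0) at_top"
    unfolding G_def using \<kappa>0 \<Phi>0 \<alpha>0 by real_asymp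
  have limK: "((\<lambda>p. exp (- m * K p)) \<longlongrightarrow> 0) at_top" if "0 < m" for m
  proof -
    have "((\<lambda>x::real. exp (- m * x)) \<longlongrightarrow> 0) at_top" using that by real_asymp
    then show ?thesis by (rule filterlim_compose[OF _ Kinf])
  qed
  have \<delta>3': "0 < 1 - \<delta>" using \<delta>1 by simp
  have \<mu>0: "0 < \<mu>" unfolding \<mu>_def using \<gamma>0 a0 \<delta>3' \<delta>0 by simp
  have \<mu>'0: "0 < \<mu>'" unfolding \<mu>'_def using \<gamma>0 a0 \<delta>3' \<delta>0 \<rho>0 by simp
  have LBeq: "LB = (\<lambda>p. 1 - exp (- G p) - 2 * exp (- \<mu> * K p) - exp (- \<mu>' * K p))"
    by (simp add: fun_eq_iff LB_def)
  have LBlim: "(LB \<longlongrightarrow> 1) at_top"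
  proof -
    have "((\<lambda>p. 1 - exp (- G p) - 2 * exp (- \<mu> * K p) - exp (- \<mu>' * K p)) \<longlongrightarrow> 1 - 0 - 2 * 0 - 0) at_top"
      by (intro tendsto_intros lim1 limK \<mu>0 \<mu>'0)
    then show ?thesis unfolding LBeq by simp
  qed
  have "(F \<longlongrightarrow> 1) at_top" by (rule tendsto_sandwich[OF evLB evF1 LBlim tendsto_const])
  then show ?thesis unfolding F_def .
qed

end
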